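(* Let $\|\cdot\|$ be any norm on $\mathbb R^d$ with dual norm $\|\cdot\|_*$, and let $\alpha\in(0,1)$, $\eta>0$, $T\in\mathbb N$. Let $f:\mathbb R^d\to\mathbb R$ be differentiable, bounded below, with $L_{\|\cdot\|}(f)<\infty$, and $\Delta_0=f(x_0)-\inf f$. Let $f_0,\dots,f_{T-1}$ be mutually independent random differentiable functions with $\mathbb E[\nabla f_t(x)]=\nabla f(x)$ for all $t,x$ and $\sup_{t,x}\mathbb E\|\nabla f_t(x)-\nabla f(x)\|_*^2\le\sigma_{\|\cdot\|_*}^2$. Let $(x_t)$ be generated by normalized steepest descent with momentum under $\|\cdot\|$. Then $$\mathbb E\,\frac1T\sum_{t=0}^{T-1}\|\nabla f(x_t)\|_*\le\frac{\Delta_0}{\eta T}+\frac{2\eta}{\alpha}L_{\|\cdot\|}(f)+\frac{2}{\alpha T}\sigma_{\|\cdot\|_*}+2\sigma_{\|\cdot\|_*}\min\big(1,\alpha^{1/2}\psi(\|\cdot\|_*,\|\cdot\|_2)\big),$$ where $\psi(\|\cdot\|_*,\|\cdot\|_2)=\sup_{x\ne0}\frac{\|x\|_*}{\|x\|_2}\cdot\sup_{x\ne0}\frac{\|x\|_2}{\|x\|_*}$.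
   Context: For a norm $\|\cdot\|$ with dual $\|\cdot\|_*$, $L_{\|\cdot\|}(f)$ is the smallest $L$ with $\|\nabla f(x)-\nabla f(y)\|_*\le L\|x-y\|$ for all $x,y$. Normalized steepest descent with momentum under a norm $\|\cdot\|$: given $x_0$, set $g_t=\nabla f_t(x_t)$, $m_0=g_0$, $m_t=(1-\alpha)m_{t-1}+\alpha g_t$ for $t\ge1$, $u_t\in\arg\max_{\|u\|\le1}\langle m_t,u\rangle$, $x_{t+1}=x_t-\eta u_t$. *)

theory Defs
  imports "HOL-Probability.Probability"
begin

definition is_norm :: "('a::euclidean_space \<Rightarrow> real) \<Rightarrow> bool" where
  "is_norm N \<longleftrightarrow> (\<forall>x. N x = 0 \<longleftrightarrow> x = 0) \<and> (\<forall>x y. N (x + y) \<le> N x + N y)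
     \<and> (\<forall>c x. N (c *\<^sub>R x) = \<bar>c\<bar> * N x)"

text \<open>Dual norm, identifying the dual space with the space itself via the inner product.\<close>
definition dual_norm :: "('a::euclidean_space \<Rightarrow> real) \<Rightarrow> 'a \<Rightarrow> real" where
  "dual_norm N g = Sup {g \<bullet> u | u. N u \<le> 1}"

definition smooth_const :: "('a::euclidean_space \<Rightarrow> real) \<Rightarrow> ('a \<Rightarrow> 'a) \<Rightarrow> real" where
  "smooth_const N g = Inf {L. \<forall>x y. dual_norm N (g x - g y) \<le> L * N (x - y)}"

definition psi :: "('a::euclidean_space \<Rightarrow> real) \<Rightarrow> real" where
  "psi N = (SUP x\<in>-{0}. dual_norm N x / norm x) * (SUP x\<in>-{0}. norm x / dual_norm N x)"

text \<open>Given a selection rule sel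
  (sel t m is the chosen maximiser u_t of <m,u> over N u <= 1), step size eta,
  momentum alpha, start x0 and gradient oracles Gs t (gradient of f_t),
  nsdm ... t = (x_t, m_t).\<close>
primrec nsdm :: "(nat \<Rightarrow> 'a \<Rightarrow> 'a) \<Rightarrow> real \<Rightarrow> real \<Rightarrow> 'a::real_vector \<Rightarrow> (nat \<Rightarrow> 'a \<Rightarrow> 'a)
    \<Rightarrow> nat \<Rightarrow> 'a \<times> 'a" where
  "nsdm sel \<alpha> \<eta> x0 Gs 0 = (x0, Gs 0 x0)"
| "nsdm sel \<alpha> \<eta> x0 Gs (Suc t) =
     (let (x, m) = nsdm sel \<alpha> \<eta> x0 Gs t;
          x' = x - \<eta> *\<^sub>R sel t m
      in (x', (1 - \<alpha>) *\<^sub>R m + \<alpha> *\<^sub>R Gs (Suc t) x'))"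

end

theory Submission
  imports Defs
begin


section \<open>Norm facts\<close>

lemma isnD:
  assumes "is_norm N"
  shows "N x = 0 \<longleftrightarrow> x = 0" "N (x + y) \<le> N x + N y" "N (c *\<^sub>R x) = \<bar>c\<bar> * N x"
  using assms unfolding is_norm_def by blast+

lemma isn_zero: "is_norm N \<Longrightarrow> N 0 = 0"
  using isnD(1) by blast

lemma isn_minus: "is_norm N \<Longrightarrow> N (- x) = N x"
  using isnD(3)[of N "-1" x] by simp

lemma isn_nonneg: "is_norm N \<Longrightarrow> N x \<ge> 0"
proof -
  assume n: "is_norm N"
  have "N (x + - x) \<le> N x + N (-x)" using isnD(2)[OF n] .
  then show ?thesis using isn_zero[OF n] isn_minus[OF n, of x] by simp
qed

lemma isn_commute: "is_norm N \<Longrightarrow> N (x - y) = N (y - x)"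
  using isn_minus[of N "x - y"] by simp

lemma isn_diff: "is_norm N \<Longrightarrow> N x - N y \<le> N (x - y)"
  using isnD(2)[of N "x - y" y] by simp

lemma isn_sum: "is_norm N \<Longrightarrow> N (sum f A) \<le> (\<Sum>a\<in>A. N (f a))"
proof (induction A rule: infinite_finite_induct)
  case (infinite A) then show ?case by (simp add: isn_zero)
next
  case empty then show ?case by (simp add: isn_zero)
next
  case (insert x F)
  then show ?case using isnD(2)[OF insert.prems, of "f x" "sum f F"] by simp
qed

lemma isn_upper:
  assumes n: "is_norm N"
  shows "\<exists>C>0. \<forall>x::'a::euclidean_space. N x \<le> C * norm x"
proof -
  define C where "C = 1 + (\<Sum>b\<in>(Basis::'a set). N b)"
  have C0: "(\<Sum>b\<in>(Basis::'a set). N b) \<ge> 0" by (simp add: isn_nonneg[OF n] sum_nonneg)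
  have "N x \<le> C * norm x" for x :: 'a
  proof -
    have "N x = N (\<Sum>b\<in>Basis. (x \<bullet> b) *\<^sub>R b)" by (simp add: euclidean_representation)
    also have "\<dots> \<le> (\<Sum>b\<in>Basis. N ((x \<bullet> b) *\<^sub>R b))" by (rule isn_sum[OF n])
    also have "\<dots> = (\<Sum>b\<in>Basis. \<bar>x \<bullet> b\<bar> * N b)" using isnD(3)[OF n] by simp
    also have "\<dots> \<le> (\<Sum>b\<in>Basis. norm x * N b)"
      by (intro sum_mono mult_right_mono) (auto simp: Basis_le_norm isn_nonneg[OF n])
    also have "\<dots> = norm x * (\<Sum>b\<in>(Basis::'a set). N b)" by (simp add: sum_distrib_left)
    also have "\<dots> \<le> C * norm x" unfolding C_def by (simp add: algebra_simps)
    finally show ?thesis .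
  qed
  moreover have "C > 0" unfolding C_def using C0 by simp
  ultimately show ?thesis by blast
qed

lemma isn_continuous:
  assumes n: "is_norm N"
  shows "continuous_on UNIV (N :: 'a::euclidean_space \<Rightarrow> real)"
proof -
  obtain C where C: "C > 0" "\<And>x::'a. N x \<le> C * norm x" using isn_upper[OF n] by blast
  have "\<bar>N x - N y\<bar> \<le> C * dist x y" for x y :: 'a
    using isn_diff[OF n, of x y] isn_diff[OF n, of y x] isn_commute[OF n, of x y] C(2)[of "x - y"]
    by (simp add: dist_norm abs_le_iff)
  then have "C-lipschitz_on UNIV N"
    by (intro lipschitz_onI) (auto simp: dist_real_def C(1) less_imp_le)
  then show ?thesis by (rule lipschitz_on_continuous_on)
qed

lemma isn_lower:
  assumes n: "is_norm N"
  shows "\<exists>c>0. \<forall>x::'a::euclidean_space. c * norm x \<le> N x"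
proof -
  have ne: "sphere (0::'a) 1 \<noteq> {}"
  proof -
    obtain b :: 'a where "b \<in> Basis" using nonempty_Basis by blast
    then show ?thesis by (auto simp: sphere_def intro!: exI[of _ b])
  qed
  obtain z where z: "z \<in> sphere (0::'a) 1" "\<And>y. y \<in> sphere 0 1 \<Longrightarrow> N z \<le> N y"
    using continuous_attains_inf[OF compact_sphere ne continuous_on_subset[OF isn_continuous[OF n]]]
    by blast
  have z0: "z \<noteq> 0" using z(1) by auto
  have cpos: "N z > 0" using isnD(1)[OF n, of z] isn_nonneg[OF n, of z] z0 by linarith
  have "N z * norm x \<le> N x" for x :: 'a
  proof (cases "x = 0")
    case True then show ?thesis by (simp add: isn_zero[OF n])
  next
    case False
    have "N z \<le> N ((1 / norm x) *\<^sub>R x)" using False by (intro z(2)) (simp add: sphere_def)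
    also have "\<dots> = N x / norm x" using isnD(3)[OF n] by simp
    finally show ?thesis using False by (simp add: field_simps)
  qed
  then show ?thesis using cpos by blast
qed

section \<open>Dual norm facts\<close>

lemma dual_bdd:
  assumes n: "is_norm N"
  shows "bdd_above {g \<bullet> u | u::'a::euclidean_space. N u \<le> 1}"
proof -
  obtain c where c: "c > 0" "\<And>x::'a. c * norm x \<le> N x" using isn_lower[OF n] by blast
  have "g \<bullet> u \<le> norm g / c" if "N u \<le> 1" for u
  proof -
    have "norm u \<le> 1 / c" using c(2)[of u] that c(1) by (simp add: field_simps)
    then have "g \<bullet> u \<le> norm g * (1 / c)"
      using norm_cauchy_schwarz[of g u] mult_left_mono[of "norm u" "1/c" "norm g"] by simp
    then show ?thesis by simp
  qed
  then show ?thesis unfolding bdd_above_def by blast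
qed

lemma dual_upper:
  assumes n: "is_norm N" and u: "N u \<le> 1"
  shows "g \<bullet> u \<le> dual_norm N g"
  unfolding dual_norm_def using u by (intro cSup_upper[OF _ dual_bdd[OF n]]) blast

lemma dual_least:
  assumes n: "is_norm N" and B: "\<And>u. N u \<le> 1 \<Longrightarrow> g \<bullet> u \<le> B"
  shows "dual_norm N g \<le> B"
  unfolding dual_norm_def
proof (rule cSup_least)
  have "g \<bullet> 0 \<in> {g \<bullet> u |u. N u \<le> 1}" using isn_zero[OF n] by (auto intro!: exI[of _ 0])
  then show "{g \<bullet> u |u. N u \<le> 1} \<noteq> {}" by blast
qed (use B in blast)

lemma dual_nonneg: "is_norm N \<Longrightarrow> dual_norm N g \<ge> 0"
  using dual_upper[of N 0 g] by (simp add: isn_zero)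

lemma dual_ineq:
  assumes n: "is_norm N"
  shows "g \<bullet> u \<le> dual_norm N g * N u"
proof (cases "u = 0")
  case True then show ?thesis by (simp add: isn_zero[OF n])
next
  case False
  then have p: "N u > 0" using isnD(1)[OF n, of u] isn_nonneg[OF n, of u] by linarith
  have "N ((1 / N u) *\<^sub>R u) \<le> 1" using p isnD(3)[OF n] by simp
  then have "g \<bullet> ((1 / N u) *\<^sub>R u) \<le> dual_norm N g" by (rule dual_upper[OF n])
  then show ?thesis using p by (simp add: field_simps)
qed

lemma dual_triangle:
  assumes n: "is_norm N"
  shows "dual_norm N (a + b) \<le> dual_norm N a + dual_norm N b"
  by (rule dual_least[OF n]) (use dual_upper[OF n] in \<open>fastforce simp: inner_add_left intro: add_mono\<close>)

lemma dual_scale: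
  assumes n: "is_norm N" and c: "c \<ge> 0"
  shows "dual_norm N (c *\<^sub>R a) = c * dual_norm N a"
proof (cases "c = 0")
  case True
  then show ?thesis using dual_nonneg[OF n, of 0] dual_least[OF n, of 0 0] by simp
next
  case False
  then have cp: "c > 0" using c by simp
  have "dual_norm N (c *\<^sub>R a) \<le> c * dual_norm N a"
    by (rule dual_least[OF n]) (use dual_upper[OF n] cp in \<open>auto intro: mult_left_mono\<close>)
  moreover have "c * dual_norm N a \<le> dual_norm N (c *\<^sub>R a)"
  proof -
    have "dual_norm N a \<le> dual_norm N (c *\<^sub>R a) / c"
      by (rule dual_least[OF n]) (use dual_upper[OF n, of _ "c *\<^sub>R a"] cp in \<open>auto simp: field_simps\<close>)
    then show ?thesis using cp by (simp add: field_simps)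
  qed
  ultimately show ?thesis by simp
qed

lemma dual_minus:
  assumes n: "is_norm N"
  shows "dual_norm N (- a) = dual_norm N a"
proof -
  have *: "dual_norm N (- b) \<le> dual_norm N b" for b
    by (rule dual_least[OF n]) (use dual_upper[OF n, of "- _" b] isn_minus[OF n] in \<open>force\<close>)
  show ?thesis using *[of a] *[of "-a"] by simp
qed

lemma dual_diff:
  assumes n: "is_norm N"
  shows "dual_norm N a - dual_norm N b \<le> dual_norm N (a - b)"
  using dual_triangle[OF n, of "a - b" b] by simp

lemma dual_le_norm:
  assumes n: "is_norm N"
  shows "\<exists>C>0. \<forall>g::'a::euclidean_space. dual_norm N g \<le> C * norm g"
proof -
  obtain c where c: "c > 0" "\<And>x::'a. c * norm x \<le> N x" using isn_lower[OF n] by blast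
  have "dual_norm N g \<le> (1/c) * norm g" for g :: 'a
  proof (rule dual_least[OF n])
    fix u :: 'a assume "N u \<le> 1"
    then have "norm u \<le> 1 / c" using c(2)[of u] c(1) by (simp add: field_simps)
    then show "g \<bullet> u \<le> (1/c) * norm g"
      using norm_cauchy_schwarz[of g u] mult_left_mono[of "norm u" "1/c" "norm g"] by simp
  qed
  then show ?thesis using c(1) by (intro exI[of _ "1/c"]) auto
qed

lemma norm_le_dual:
  assumes n: "is_norm N"
  shows "\<exists>C>0. \<forall>g::'a::euclidean_space. norm g \<le> C * dual_norm N g"
proof -
  obtain C where C: "C > 0" "\<And>x::'a. N x \<le> C * norm x" using isn_upper[OF n] by blast
  have "norm g \<le> C * dual_norm N g" for g :: 'a
  proof (cases "g = 0")
    case True then show ?thesis using dual_nonneg[OF n, of g] C by simp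
  next
    case False
    then have p: "N g > 0" using isnD(1)[OF n, of g] isn_nonneg[OF n, of g] by linarith
    have "N ((1 / N g) *\<^sub>R g) \<le> 1" using p isnD(3)[OF n] by simp
    then have "g \<bullet> ((1 / N g) *\<^sub>R g) \<le> dual_norm N g" by (rule dual_upper[OF n])
    then have "norm g ^ 2 / N g \<le> dual_norm N g" by (simp add: power2_norm_eq_inner)
    then have "norm g ^ 2 \<le> dual_norm N g * N g" using p by (simp add: field_simps)
    also have "\<dots> \<le> dual_norm N g * (C * norm g)"
      by (intro mult_left_mono C(2) dual_nonneg[OF n])
    finally have "norm g * norm g \<le> (C * dual_norm N g) * norm g" by (simp add: power2_eq_square algebra_simps)
    then show ?thesis using False by simp
  qed
  then show ?thesis using C(1) by blast
qed

lemma dual_continuous: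
  assumes n: "is_norm N"
  shows "continuous_on UNIV (dual_norm N :: 'a::euclidean_space \<Rightarrow> real)"
proof -
  obtain C where C: "C > 0" "\<And>x::'a. dual_norm N x \<le> C * norm x" using dual_le_norm[OF n] by blast
  have "\<bar>dual_norm N x - dual_norm N y\<bar> \<le> C * dist x y" for x y :: 'a
    using dual_diff[OF n, of x y] dual_diff[OF n, of y x] dual_minus[OF n, of "x - y"] C(2)[of "x - y"]
    by (simp add: dist_norm abs_le_iff)
  then have "C-lipschitz_on UNIV (dual_norm N)"
    by (intro lipschitz_onI) (auto simp: dist_real_def C(1) less_imp_le)
  then show ?thesis by (rule lipschitz_on_continuous_on)
qed

lemma dual_measurable[measurable]:
  assumes n: "is_norm N"
  shows "(dual_norm N :: 'a::euclidean_space \<Rightarrow> real) \<in> borel_measurable borel"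
  using dual_continuous[OF n] by (rule borel_measurable_continuous_onI)



lemma descent:
  fixes f :: "'a::euclidean_space \<Rightarrow> real"
  assumes n: "is_norm N" and L: "L \<ge> 0"
    and f_grad: "\<forall>x. (f has_derivative (\<lambda>h. g x \<bullet> h)) (at x)"
    and sm: "\<forall>x y. dual_norm N (g x - g y) \<le> L * N (x - y)"
  shows "f (x + v) \<le> f x + g x \<bullet> v + L * (N v)\<^sup>2"
proof -
  define h where "h s = f (x + s *\<^sub>R v)" for s :: real
  have hd: "(h has_derivative (\<lambda>r. r * (g (x + s *\<^sub>R v) \<bullet> v))) (at s within {0..1})" for s
  proof -
    have "((\<lambda>s. x + s *\<^sub>R v) has_derivative (\<lambda>r. r *\<^sub>R v)) (at s)"
      by (auto intro!: derivative_eq_intros)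
    from has_derivative_compose[OF this f_grad[rule_format]]
    have "(h has_derivative (\<lambda>r. g (x + s *\<^sub>R v) \<bullet> (r *\<^sub>R v))) (at s)"
      unfolding h_def o_def by simp
    then show ?thesis by (auto intro: has_derivative_at_withinI simp: has_derivative_at_withinI)
  qed
  obtain s where s: "s \<in> {0..1}" "h 1 - h 0 = 1 * (g (x + s *\<^sub>R v) \<bullet> v)"
    using mvt_very_simple[of 0 1 h "\<lambda>s r. r * (g (x + s *\<^sub>R v) \<bullet> v)"] hd by auto
  have "(g (x + s *\<^sub>R v) - g x) \<bullet> v \<le> dual_norm N (g (x + s *\<^sub>R v) - g x) * N v"
    by (rule dual_ineq[OF n])
  also have "\<dots> \<le> (L * N (s *\<^sub>R v)) * N v"
    using sm[rule_format, of "x + s *\<^sub>R v" x] isn_nonneg[OF n, of v] by (intro mult_right_mono) auto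
  also have "\<dots> = L * s * (N v)\<^sup>2" using isnD(3)[OF n, of s v] s(1) by (simp add: power2_eq_square)
  also have "\<dots> \<le> L * (N v)\<^sup>2"
  proof -
    have "L * s \<le> L" using s(1) L by (simp add: mult_left_le)
    then show ?thesis by (intro mult_right_mono) auto
  qed
  finally show ?thesis using s(2) unfolding h_def by (simp add: inner_diff_left)
qed

lemma nsdm_Suc_fst: "fst (nsdm sel \<alpha> \<eta> x0 Gs (Suc t)) = fst (nsdm sel \<alpha> \<eta> x0 Gs t) - \<eta> *\<^sub>R sel t (snd (nsdm sel \<alpha> \<eta> x0 Gs t))"
  by (simp add: case_prod_beta Let_def)

lemma nsdm_Suc_snd: "snd (nsdm sel \<alpha> \<eta> x0 Gs (Suc t)) = (1 - \<alpha>) *\<^sub>R snd (nsdm sel \<alpha> \<eta> x0 Gs t) + \<alpha> *\<^sub>R Gs (Suc t) (fst (nsdm sel \<alpha> \<eta> x0 Gs (Suc t)))"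
  by (simp add: case_prod_beta Let_def)

lemma nsdm_cong: "(\<And>s. s \<le> t \<Longrightarrow> Gs s = Gs' s) \<Longrightarrow> nsdm sel \<alpha> \<eta> x0 Gs t = nsdm sel \<alpha> \<eta> x0 Gs' t"
  by (induction t) (auto simp: Let_def)

primrec noise :: "real \<Rightarrow> (nat \<Rightarrow> 'a::real_vector) \<Rightarrow> nat \<Rightarrow> 'a" where
  "noise \<alpha> xi 0 = xi 0"
| "noise \<alpha> xi (Suc t) = (1 - \<alpha>) *\<^sub>R noise \<alpha> xi t + \<alpha> *\<^sub>R xi (Suc t)"

primrec noiseS :: "real \<Rightarrow> (nat \<Rightarrow> 'a::real_vector) \<Rightarrow> nat \<Rightarrow> 'a" where
  "noiseS \<alpha> xi 0 = 0"
| "noiseS \<alpha> xi (Suc t) = (1 - \<alpha>) *\<^sub>R noiseS \<alpha> xi t + \<alpha> *\<^sub>R xi (Suc t)"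

lemma noise_split: "noise \<alpha> xi t = noiseS \<alpha> xi t + (1 - \<alpha>) ^ t *\<^sub>R xi 0"
  by (induction t) (auto simp: algebra_simps)

lemma noise_cong: "(\<And>s. s \<le> t \<Longrightarrow> xi s = xi' s) \<Longrightarrow> noise \<alpha> xi t = noise \<alpha> xi' t"
  by (induction t) auto

lemma noiseS_cong: "(\<And>s. s \<le> t \<Longrightarrow> xi s = xi' s) \<Longrightarrow> noiseS \<alpha> xi t = noiseS \<alpha> xi' t"
  by (induction t) auto

lemma deterministic:
  fixes f :: "'a::euclidean_space \<Rightarrow> real"
  assumes n: "is_norm N" and L: "L \<ge> 0"
    and alpha: "0 < \<alpha>" "\<alpha> < 1" and eta: "0 < \<eta>"
    and f_grad: "\<forall>x. (f has_derivative (\<lambda>h. g x \<bullet> h)) (at x)"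
    and sm: "\<forall>x y. dual_norm N (g x - g y) \<le> L * N (x - y)"
    and B: "\<And>x. B \<le> f x"
    and sel_max: "\<forall>t m. N (sel t m) \<le> 1 \<and> (\<forall>u. N u \<le> 1 \<longrightarrow> m \<bullet> u \<le> m \<bullet> sel t m)"
  shows "(\<Sum>t<T. dual_norm N (g (fst (nsdm sel \<alpha> \<eta> x0 Gs t))))
     \<le> (f x0 - B) / \<eta> + real T * (2 * L * \<eta> / \<alpha>)
       + 2 * (\<Sum>t<T. dual_norm N (noise \<alpha> (\<lambda>s. Gs s (fst (nsdm sel \<alpha> \<eta> x0 Gs s)) - g (fst (nsdm sel \<alpha> \<eta> x0 Gs s))) t))"
proof -
  define X where "X t = fst (nsdm sel \<alpha> \<eta> x0 Gs t)" for t
  define Mo where "Mo t = snd (nsdm sel \<alpha> \<eta> x0 Gs t)" for t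
  define xi where "xi s = Gs s (X s) - g (X s)" for s
  define nu where "nu = noise \<alpha> xi"
  define eps where "eps t = Mo t - g (X t)" for t
  define D where "D t = eps t - nu t" for t
  have XS: "X (Suc t) = X t - \<eta> *\<^sub>R sel t (Mo t)" for t unfolding X_def Mo_def by (rule nsdm_Suc_fst)
  have MS: "Mo (Suc t) = (1 - \<alpha>) *\<^sub>R Mo t + \<alpha> *\<^sub>R Gs (Suc t) (X (Suc t))" for t
    unfolding X_def Mo_def by (rule nsdm_Suc_snd)
  have D0: "D 0 = 0" unfolding D_def eps_def nu_def xi_def Mo_def X_def by simp
  have DS: "D (Suc t) = (1 - \<alpha>) *\<^sub>R D t + (1 - \<alpha>) *\<^sub>R (g (X t) - g (X (Suc t)))" for t
    unfolding D_def eps_def nu_def noise.simps MS xi_def[of "Suc t"]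
    by (simp add: algebra_simps nu_def[symmetric])
  have stepX: "N (X t - X (Suc t)) \<le> \<eta>" for t
  proof -
    have "N (X t - X (Suc t)) = \<eta> * N (sel t (Mo t))" unfolding XS using isnD(3)[OF n] eta by simp
    also have "\<dots> \<le> \<eta>" using sel_max eta by (simp add: mult_left_le)
    finally show ?thesis .
  qed
  have Dbound: "dual_norm N (D t) \<le> (1 - \<alpha>) * L * \<eta> / \<alpha>" for t
  proof (induction t)
    case 0 then show ?case using D0 dual_scale[OF n, of 0 0] alpha L eta by simp
  next
    case (Suc t)
    have "dual_norm N (D (Suc t)) \<le> (1 - \<alpha>) * dual_norm N (D t) + (1 - \<alpha>) * dual_norm N (g (X t) - g (X (Suc t)))"
      unfolding DS using dual_triangle[OF n] dual_scale[OF n] alpha by (metis diff_ge_0_iff_ge less_imp_le)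
    also have "\<dots> \<le> (1 - \<alpha>) * ((1 - \<alpha>) * L * \<eta> / \<alpha>) + (1 - \<alpha>) * (L * \<eta>)"
    proof (intro add_mono mult_left_mono)
      show "dual_norm N (g (X t) - g (X (Suc t))) \<le> L * \<eta>"
        using sm[rule_format, of "X t" "X (Suc t)"] stepX[of t] L by (meson mult_left_mono order_trans)
    qed (use Suc alpha in auto)
    also have "\<dots> = (1 - \<alpha>) * L * \<eta> / \<alpha>" using alpha by (simp add: field_simps)
    finally show ?case .
  qed
  have step: "dual_norm N (g (X t)) \<le> (f (X t) - f (X (Suc t))) / \<eta> + L * \<eta> + 2 * dual_norm N (eps t)" for t
  proof -
    define u where "u = sel t (Mo t)"
    have Nu: "N u \<le> 1" "N u \<ge> 0" using sel_max isn_nonneg[OF n] unfolding u_def by auto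
    have "f (X (Suc t)) \<le> f (X t) + g (X t) \<bullet> (- \<eta> *\<^sub>R u) + L * (N (- \<eta> *\<^sub>R u))\<^sup>2"
      using descent[OF n L f_grad sm, of "X t" "- \<eta> *\<^sub>R u"] unfolding XS u_def by simp
    also have "L * (N (- \<eta> *\<^sub>R u))\<^sup>2 \<le> L * \<eta>\<^sup>2"
    proof -
      have "N (- \<eta> *\<^sub>R u) = \<eta> * N u" using isnD(3)[OF n, of \<eta> u] isn_minus[OF n, of "\<eta> *\<^sub>R u"] eta by simp
      moreover have "(\<eta> * N u)\<^sup>2 \<le> \<eta>\<^sup>2" using Nu eta by (simp add: power_mult_distrib power_le_one)
      ultimately show ?thesis using L by (simp add: mult_left_mono)
    qed
    finally have d1: "f (X (Suc t)) \<le> f (X t) - \<eta> * (g (X t) \<bullet> u) + L * \<eta>\<^sup>2" by simp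
    have mu: "dual_norm N (Mo t) \<le> Mo t \<bullet> u"
      by (rule dual_least[OF n]) (use sel_max u_def in auto)
    have eu: "eps t \<bullet> u \<le> dual_norm N (eps t)" by (rule dual_upper[OF n Nu(1)])
    have gm: "dual_norm N (g (X t)) \<le> dual_norm N (Mo t) + dual_norm N (eps t)"
      using dual_triangle[OF n, of "Mo t" "- eps t"] dual_minus[OF n, of "eps t"] unfolding eps_def by simp
    have "g (X t) \<bullet> u = Mo t \<bullet> u - eps t \<bullet> u" unfolding eps_def by (simp add: inner_diff_left)
    then have "dual_norm N (g (X t)) \<le> g (X t) \<bullet> u + 2 * dual_norm N (eps t)" using mu eu gm by linarith
    then have "\<eta> * dual_norm N (g (X t)) \<le> \<eta> * (g (X t) \<bullet> u) + \<eta> * (2 * dual_norm N (eps t))"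
      using eta by (simp add: distrib_left[symmetric] mult_left_mono)
    with d1 have "\<eta> * dual_norm N (g (X t)) \<le> (f (X t) - f (X (Suc t))) + L * \<eta>\<^sup>2 + \<eta> * (2 * dual_norm N (eps t))"
      by linarith
    then show ?thesis using eta by (simp add: field_simps power2_eq_square)
  qed
  have epsb: "dual_norm N (eps t) \<le> (1 - \<alpha>) * L * \<eta> / \<alpha> + dual_norm N (nu t)" for t
    using dual_triangle[OF n, of "D t" "nu t"] Dbound[of t] unfolding D_def by simp
  have "(\<Sum>t<T. dual_norm N (g (X t))) \<le> (\<Sum>t<T. (f (X t) - f (X (Suc t))) / \<eta> + L * \<eta> + 2 * ((1 - \<alpha>) * L * \<eta> / \<alpha> + dual_norm N (nu t)))"
  proof (intro sum_mono order_trans[OF step])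
    fix t show "(f (X t) - f (X (Suc t))) / \<eta> + L * \<eta> + 2 * dual_norm N (eps t) \<le> (f (X t) - f (X (Suc t))) / \<eta> + L * \<eta> + 2 * ((1 - \<alpha>) * L * \<eta> / \<alpha> + dual_norm N (nu t))"
      using epsb[of t] by (intro add_left_mono mult_left_mono) auto
  qed
  also have "\<dots> = (\<Sum>t<T. f (X t) - f (X (Suc t))) / \<eta> + real T * (L * \<eta> + 2 * ((1 - \<alpha>) * L * \<eta> / \<alpha>)) + 2 * (\<Sum>t<T. dual_norm N (nu t))"
    by (simp add: sum.distrib sum_divide_distrib sum_distrib_left algebra_simps)
  also have "(\<Sum>t<T. f (X t) - f (X (Suc t))) = f (X 0) - f (X T)" by (rule sum_lessThan_telescope')
  also have "(f (X 0) - f (X T)) / \<eta> \<le> (f x0 - B) / \<eta>"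
    using B[of "X T"] eta unfolding X_def by (simp add: divide_right_mono)
  also have "real T * (L * \<eta> + 2 * ((1 - \<alpha>) * L * \<eta> / \<alpha>)) \<le> real T * (2 * L * \<eta> / \<alpha>)"
  proof (intro mult_left_mono)
    have "L * \<eta> + 2 * ((1 - \<alpha>) * L * \<eta> / \<alpha>) = (L * \<eta>) * (2 / \<alpha> - 1)" using alpha by (simp add: field_simps)
    also have "\<dots> \<le> (L * \<eta>) * (2 / \<alpha>)" using L eta by (intro mult_left_mono) auto
    finally show "L * \<eta> + 2 * ((1 - \<alpha>) * L * \<eta> / \<alpha>) \<le> 2 * L * \<eta> / \<alpha>" by simp
  qed simp
  finally show ?thesis unfolding X_def nu_def xi_def by simp
qed



section \<open>A measurable gradient operator\<close>

definition kf :: "nat \<Rightarrow> 'a::euclidean_space \<Rightarrow> 'a \<Rightarrow> int" where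
  "kf m y = restrict (\<lambda>b. \<lfloor>2 ^ m * (y \<bullet> b)\<rfloor>) Basis"

definition Rk :: "nat \<Rightarrow> ('a::euclidean_space \<Rightarrow> int) \<Rightarrow> 'a" where
  "Rk m k = (\<Sum>b\<in>Basis. (real_of_int (k b) / 2 ^ m) *\<^sub>R b)"

definition evalc :: "('a::euclidean_space \<Rightarrow> real) \<Rightarrow> 'a \<Rightarrow> real" where
  "evalc \<phi> y = lim (\<lambda>m. \<phi> (Rk m (kf m y)))"

definition dirder :: "('a::euclidean_space \<Rightarrow> real) \<Rightarrow> 'a \<Rightarrow> 'a \<Rightarrow> real" where
  "dirder \<phi> x b = lim (\<lambda>n. real (Suc n) * (evalc \<phi> (x + inverse (real (Suc n)) *\<^sub>R b) - evalc \<phi> x))"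

definition Phi :: "('a::euclidean_space \<Rightarrow> real) \<Rightarrow> 'a \<Rightarrow> 'a" where
  "Phi \<phi> x = (\<Sum>b\<in>Basis. dirder \<phi> x b *\<^sub>R b)"

lemma kf_meas: "kf m \<in> measurable borel (count_space (Basis \<rightarrow>\<^sub>E (UNIV :: int set)))"
proof -
  have cnt: "countable (Basis \<rightarrow>\<^sub>E (UNIV :: int set))" by (rule countable_PiE) auto
  have 1: "kf m \<in> space borel \<rightarrow> Basis \<rightarrow>\<^sub>E UNIV" by (auto simp: kf_def)
  have 2: "kf m -` {a} \<inter> space borel \<in> sets borel" if a: "a \<in> Basis \<rightarrow>\<^sub>E UNIV" for a :: "'a \<Rightarrow> int"
  proof -
    have "kf m -` {a} \<inter> space borel = {y \<in> space borel. \<forall>b\<in>Basis. \<lfloor>2 ^ m * (y \<bullet> b)\<rfloor> = a b}"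
      using a by (auto simp: kf_def fun_eq_iff PiE_def extensional_def)
    also have "\<dots> \<in> sets borel" by measurable
    finally show ?thesis .
  qed
  show ?thesis using 1 2 by (subst measurable_count_space_eq_countable[OF cnt]) blast
qed

lemma rnd_conv: "(\<lambda>m. Rk m (kf m y)) \<longlonglongrightarrow> (y::'a::euclidean_space)"
proof -
  have b: "norm (Rk m (kf m y) - y) \<le> real DIM('a) / 2 ^ m" for m
  proof -
    have c: "\<bar>(Rk m (kf m y) - y) \<bullet> b\<bar> \<le> 1 / 2 ^ m" if "b \<in> Basis" for b
    proof -
      define z :: real where "z = 2 ^ m"
      have zp: "z > 0" unfolding z_def by simp
      define fl where "fl = real_of_int \<lfloor>z * (y \<bullet> b)\<rfloor>"
      have eq: "(Rk m (kf m y) - y) \<bullet> b = fl / z - y \<bullet> b"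
        using that by (simp add: Rk_def kf_def inner_diff_left inner_sum_left inner_Basis if_distrib fl_def z_def cong: if_cong)
      have "fl \<le> z * (y \<bullet> b)" "z * (y \<bullet> b) < fl + 1" unfolding fl_def by linarith+
      then have a1: "\<bar>fl - z * (y \<bullet> b)\<bar> \<le> 1" by linarith
      have "fl / z - y \<bullet> b = (fl - z * (y \<bullet> b)) / z" using zp by (simp add: field_simps)
      then have "\<bar>fl / z - y \<bullet> b\<bar> = \<bar>fl - z * (y \<bullet> b)\<bar> / z" using zp by simp
      also have "\<dots> \<le> 1 / z" using a1 zp by (simp add: divide_right_mono)
      finally show ?thesis using eq unfolding z_def by simp
    qed
    have "norm (Rk m (kf m y) - y) \<le> (\<Sum>b\<in>Basis. \<bar>(Rk m (kf m y) - y) \<bullet> b\<bar>)" by (rule norm_le_l1)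
    also have "\<dots> \<le> (\<Sum>b\<in>(Basis::'a set). 1 / 2 ^ m)" by (intro sum_mono c)
    finally show ?thesis by simp
  qed
  have "(\<lambda>m. real DIM('a) / 2 ^ m) \<longlonglongrightarrow> 0"
    by (intro LIMSEQ_divide_realpow_zero) auto
  then have "(\<lambda>m. norm (Rk m (kf m y) - y)) \<longlonglongrightarrow> 0"
    by (rule Lim_null_comparison[rotated]) (use b in auto)
  then show ?thesis by (simp add: LIM_zero_iff tendsto_norm_zero_iff)
qed

lemma evalc_cont: "continuous_on UNIV \<phi> \<Longrightarrow> evalc \<phi> y = \<phi> y"
  unfolding evalc_def
  by (intro limI continuous_on_tendsto_compose[OF _ rnd_conv]) auto

lemma evalc_meas:
  assumes A: "A \<in> measurable K (Pi\<^sub>M UNIV (\<lambda>_. borel))" and Y: "Y \<in> borel_measurable K"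
  shows "(\<lambda>k. evalc (A k) (Y k)) \<in> borel_measurable K"
  unfolding evalc_def
proof (rule borel_measurable_lim_metric)
  fix m
  have "(\<lambda>k. (\<lambda>i k. A k (Rk m i)) ((\<lambda>k. kf m (Y k)) k) k) \<in> borel_measurable K"
  proof (rule measurable_compose_countable'[where f="\<lambda>i k. A k (Rk m i)" and g="\<lambda>k. kf m (Y k)" and I="Basis \<rightarrow>\<^sub>E UNIV"])
    show "(\<lambda>k. A k (Rk m i)) \<in> borel_measurable K" for i
      using measurable_component_singleton[of "Rk m i" UNIV "\<lambda>_. borel"] A by measurable
    show "(\<lambda>k. kf m (Y k)) \<in> measurable K (count_space (Basis \<rightarrow>\<^sub>E UNIV))"
      by (rule measurable_compose[OF Y kf_meas])
    show "countable (Basis \<rightarrow>\<^sub>E (UNIV :: int set))" by (rule countable_PiE) auto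
  qed
  then show "(\<lambda>k. A k (Rk m (kf m (Y k)))) \<in> borel_measurable K" by simp
qed

lemma Phi_meas:
  assumes A: "A \<in> measurable K (Pi\<^sub>M UNIV (\<lambda>_. borel))" and Y: "Y \<in> borel_measurable K"
  shows "(\<lambda>k. Phi (A k) (Y k)) \<in> borel_measurable K"
proof -
  have e: "(\<lambda>k. evalc (A k) (Y k + c *\<^sub>R b)) \<in> borel_measurable K" for c b
    by (rule evalc_meas[OF A]) (use Y in measurable)
  have "(\<lambda>k. dirder (A k) (Y k) b) \<in> borel_measurable K" for b
    unfolding dirder_def
    by (intro borel_measurable_lim_metric borel_measurable_times borel_measurable_diff
        borel_measurable_const e evalc_meas[OF A Y])
  then show ?thesis unfolding Phi_def
    by (intro borel_measurable_sum borel_measurable_scaleR borel_measurable_const)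
qed

lemma Phi_grad:
  assumes d: "\<forall>x. (\<phi> has_derivative (\<lambda>h. G x \<bullet> h)) (at x)"
  shows "Phi \<phi> x = G x"
proof -
  have cont: "continuous_on UNIV \<phi>"
    using d has_derivative_continuous by (metis continuous_at_imp_continuous_on)
  have dd: "dirder \<phi> x b = G x \<bullet> b" for b
  proof -
    define h where "h s = \<phi> (x + s *\<^sub>R b)" for s :: real
    have "((\<lambda>s. x + s *\<^sub>R b) has_derivative (\<lambda>r. r *\<^sub>R b)) (at 0)"
      by (auto intro!: derivative_eq_intros)
    from has_derivative_compose[OF this d[rule_format]]
    have "(h has_derivative (\<lambda>r. r * (G x \<bullet> b))) (at 0)"
      unfolding h_def o_def by simp
    then have "(h has_derivative (*) (G x \<bullet> b)) (at 0)"
      by (rule has_derivative_eq_rhs) (simp add: fun_eq_iff mult.commute)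
    then have "(h has_field_derivative (G x \<bullet> b)) (at 0)"
      by (simp add: has_field_derivative_def)
    then have lim0: "((\<lambda>s. (h (0 + s) - h 0) / s) \<longlongrightarrow> G x \<bullet> b) (at 0)"
      by (simp add: DERIV_def)
    have fl: "filterlim (\<lambda>n. inverse (real (Suc n))) (at 0) sequentially"
      by (rule tendsto_imp_filterlim_at_right[THEN filterlim_mono, OF LIMSEQ_inverse_real_of_nat])
         (auto intro: at_within_le_at)
    have "(\<lambda>n. (h (0 + inverse (real (Suc n))) - h 0) / inverse (real (Suc n))) \<longlonglongrightarrow> G x \<bullet> b"
      by (rule filterlim_compose[OF lim0 fl])
    then have "(\<lambda>n. real (Suc n) * (evalc \<phi> (x + inverse (real (Suc n)) *\<^sub>R b) - evalc \<phi> x)) \<longlonglongrightarrow> G x \<bullet> b"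
      unfolding h_def using evalc_cont[OF cont] by (simp add: divide_inverse mult.commute)
    then show ?thesis unfolding dirder_def by (rule limI)
  qed
  show ?thesis unfolding Phi_def dd by (simp add: euclidean_representation)
qed



lemma (in prob_space) indep_nn_bound:
  assumes ind: "indep_var S X Tm Y"
    and h: "h \<in> borel_measurable (S \<Otimes>\<^sub>M Tm)"
    and B: "\<And>x. x \<in> space S \<Longrightarrow> (\<integral>\<^sup>+\<omega>. h (x, Y \<omega>) \<partial>M) \<le> B"
  shows "(\<integral>\<^sup>+\<omega>. h (X \<omega>, Y \<omega>) \<partial>M) \<le> B"
proof -
  have rv: "random_variable S X" "random_variable Tm Y" and
    eq: "distr M S X \<Otimes>\<^sub>M distr M Tm Y = distr M (S \<Otimes>\<^sub>M Tm) (\<lambda>x. (X x, Y x))"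
    using ind unfolding indep_var_distribution_eq by auto
  interpret X: prob_space "distr M S X" by (rule prob_space_distr) fact
  interpret Y: prob_space "distr M Tm Y" by (rule prob_space_distr) fact
  interpret XY: pair_prob_space "distr M S X" "distr M Tm Y" ..
  have pm: "(\<lambda>x. (X x, Y x)) \<in> measurable M (S \<Otimes>\<^sub>M Tm)" using rv by (rule measurable_Pair)
  have "(\<integral>\<^sup>+\<omega>. h (X \<omega>, Y \<omega>) \<partial>M) = integral\<^sup>N (distr M (S \<Otimes>\<^sub>M Tm) (\<lambda>x. (X x, Y x))) h"
    using h pm by (subst nn_integral_distr) auto
  also have "\<dots> = integral\<^sup>N (distr M S X \<Otimes>\<^sub>M distr M Tm Y) h" by (simp add: eq)
  also have "\<dots> = (\<integral>\<^sup>+ x. \<integral>\<^sup>+ y. h (x, y) \<partial>distr M Tm Y \<partial>distr M S X)"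
    using h by (subst Y.nn_integral_fst) auto
  also have "\<dots> \<le> (\<integral>\<^sup>+ x. B \<partial>distr M S X)"
  proof (rule nn_integral_mono)
    fix x assume "x \<in> space (distr M S X)"
    then have x: "x \<in> space S" by simp
    have hx: "(\<lambda>y. h (x, y)) \<in> borel_measurable Tm" using h x by measurable
    show "(\<integral>\<^sup>+ y. h (x, y) \<partial>distr M Tm Y) \<le> B"
      using B[OF x] hx rv(2) by (subst nn_integral_distr) auto
  qed
  also have "\<dots> = B"
  proof -
    have "emeasure (distr M S X) (space S) = 1" using X.emeasure_space_1 by simp
    then show ?thesis by simp
  qed
  finally show ?thesis .
qed

lemma (in prob_space) indep_int_zero:
  fixes h :: "_ \<Rightarrow> real"
  assumes ind: "indep_var S X Tm Y"
    and h: "h \<in> borel_measurable (S \<Otimes>\<^sub>M Tm)"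
    and int: "integrable M (\<lambda>\<omega>. h (X \<omega>, Y \<omega>))"
    and Z: "\<And>x. x \<in> space S \<Longrightarrow> (\<integral>\<omega>. h (x, Y \<omega>) \<partial>M) = 0"
  shows "(\<integral>\<omega>. h (X \<omega>, Y \<omega>) \<partial>M) = 0"
proof -
  have rv: "random_variable S X" "random_variable Tm Y" and
    eq: "distr M S X \<Otimes>\<^sub>M distr M Tm Y = distr M (S \<Otimes>\<^sub>M Tm) (\<lambda>x. (X x, Y x))"
    using ind unfolding indep_var_distribution_eq by auto
  interpret X: prob_space "distr M S X" by (rule prob_space_distr) fact
  interpret Y: prob_space "distr M Tm Y" by (rule prob_space_distr) fact
  interpret XY: pair_prob_space "distr M S X" "distr M Tm Y" ..
  have pm: "(\<lambda>x. (X x, Y x)) \<in> measurable M (S \<Otimes>\<^sub>M Tm)" using rv by (rule measurable_Pair)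
  have int2: "integrable (distr M S X \<Otimes>\<^sub>M distr M Tm Y) h"
    unfolding eq using int h pm by (subst integrable_distr_eq) auto
  have "(\<integral>\<omega>. h (X \<omega>, Y \<omega>) \<partial>M) = integral\<^sup>L (distr M (S \<Otimes>\<^sub>M Tm) (\<lambda>x. (X x, Y x))) h"
    using h pm by (subst integral_distr) auto
  also have "\<dots> = integral\<^sup>L (distr M S X \<Otimes>\<^sub>M distr M Tm Y) h" by (simp add: eq)
  also have "\<dots> = (\<integral> x. \<integral> y. h (x, y) \<partial>distr M Tm Y \<partial>distr M S X)"
    using int2 by (rule XY.integral_fst'[symmetric])
  also have "\<dots> = (\<integral> x. 0 \<partial>distr M S X)"
  proof -
    have inner: "(\<integral> y. h (x, y) \<partial>distr M Tm Y) = 0" if x: "x \<in> space S" for x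
    proof -
      have hx: "(\<lambda>y. h (x, y)) \<in> borel_measurable Tm" using h x by measurable
      show ?thesis using Z[OF x] hx rv(2) by (subst integral_distr) auto
    qed
    show ?thesis by (intro Bochner_Integration.integral_cong) (auto simp: inner)
  qed
  finally show ?thesis by simp
qed



lemma amgm_sqrt:
  fixes A y :: real
  assumes A: "0 \<le> A" and h: "\<And>s. s > 0 \<Longrightarrow> y \<le> (A / s + s) / 2"
  shows "y \<le> sqrt A"
proof (cases "A = 0")
  case True
  show ?thesis
  proof (rule ccontr)
    assume "\<not> y \<le> sqrt A"
    then have "y > 0" using True by simp
    from h[OF this] True \<open>y > 0\<close> show False by simp
  qed
next
  case False
  then have sA: "sqrt A > 0" using A by simp
  have "y \<le> (A / sqrt A + sqrt A) / 2" by (rule h[OF sA])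
  also have "A / sqrt A = sqrt A" using sA A by (metis real_div_sqrt)
  finally show ?thesis by simp
qed

lemma (in prob_space) L2_L1:
  fixes u :: "'a \<Rightarrow> real"
  assumes u[measurable]: "u \<in> borel_measurable M" and nonneg: "\<And>\<omega>. \<omega> \<in> space M \<Longrightarrow> 0 \<le> u \<omega>"
    and A: "0 \<le> A" and bnd: "(\<integral>\<^sup>+\<omega>. ennreal ((u \<omega>)\<^sup>2) \<partial>M) \<le> ennreal A"
  shows "integrable M (\<lambda>\<omega>. (u \<omega>)\<^sup>2)" "integrable M u" "(\<integral>\<omega>. (u \<omega>)\<^sup>2 \<partial>M) \<le> A"
    "integral\<^sup>L M u \<le> sqrt A" "(\<integral>\<^sup>+\<omega>. ennreal (u \<omega>) \<partial>M) \<le> ennreal (sqrt A)"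
proof -
  show int2: "integrable M (\<lambda>\<omega>. (u \<omega>)\<^sup>2)"
  proof (rule integrableI_bounded)
    have "(\<integral>\<^sup>+\<omega>. ennreal (norm ((u \<omega>)\<^sup>2)) \<partial>M) = (\<integral>\<^sup>+\<omega>. ennreal ((u \<omega>)\<^sup>2) \<partial>M)" by simp
    also have "\<dots> < \<infinity>" using bnd by (simp add: le_less_trans)
    finally show "(\<integral>\<^sup>+\<omega>. ennreal (norm ((u \<omega>)\<^sup>2)) \<partial>M) < \<infinity>" .
  qed simp
  have i1: "integrable M (\<lambda>\<omega>. 1 + (u \<omega>)\<^sup>2)" using int2 by simp
  have ae: "AE x in M. norm (u x) \<le> norm (1 + (u x)\<^sup>2)"
  proof (rule AE_I2)
    fix x
    have "\<bar>u x\<bar> \<le> 1 + (u x)\<^sup>2"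
    proof (cases "\<bar>u x\<bar> \<le> 1")
      case True then show ?thesis by (simp add: add_increasing2)
    next
      case False
      then have "\<bar>u x\<bar> * 1 \<le> \<bar>u x\<bar> * \<bar>u x\<bar>" by (intro mult_left_mono) auto
      then show ?thesis by (simp add: power2_eq_square)
    qed
    then show "norm (u x) \<le> norm (1 + (u x)\<^sup>2)" by simp
  qed
  show intu: "integrable M u" by (rule Bochner_Integration.integrable_bound[OF i1 u ae])
  have "ennreal (\<integral>\<omega>. (u \<omega>)\<^sup>2 \<partial>M) = (\<integral>\<^sup>+\<omega>. ennreal ((u \<omega>)\<^sup>2) \<partial>M)"
    using int2 by (subst nn_integral_eq_integral) auto
  also have "\<dots> \<le> ennreal A" by (rule bnd)
  finally show I2: "(\<integral>\<omega>. (u \<omega>)\<^sup>2 \<partial>M) \<le> A" using A by simp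
  show I1: "integral\<^sup>L M u \<le> sqrt A"
  proof (rule amgm_sqrt[OF A])
    fix s :: real assume s: "s > 0"
    have "integral\<^sup>L M u \<le> (\<integral>\<omega>. ((u \<omega>)\<^sup>2 / s + s) / 2 \<partial>M)"
    proof (rule Bochner_Integration.integral_mono[OF intu])
      show "integrable M (\<lambda>\<omega>. ((u \<omega>)\<^sup>2 / s + s) / 2)" using int2 by auto
      fix \<omega> show "u \<omega> \<le> ((u \<omega>)\<^sup>2 / s + s) / 2"
      proof -
        have "0 \<le> (u \<omega> - s)\<^sup>2" by simp
        then have "2 * s * u \<omega> \<le> (u \<omega>)\<^sup>2 + s * s" by (simp add: power2_eq_square algebra_simps)
        then show ?thesis using s by (simp add: field_simps)
      qed
    qed
    also have "\<dots> = ((\<integral>\<omega>. (u \<omega>)\<^sup>2 \<partial>M) / s + s) / 2"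
      using int2 by (simp add: prob_space)
    also have "\<dots> \<le> (A / s + s) / 2" using I2 s by (simp add: divide_right_mono)
    finally show "integral\<^sup>L M u \<le> (A / s + s) / 2" .
  qed
  have "(\<integral>\<^sup>+\<omega>. ennreal (u \<omega>) \<partial>M) = ennreal (integral\<^sup>L M u)"
    using intu nonneg by (subst nn_integral_eq_integral) auto
  also have "\<dots> \<le> ennreal (sqrt A)" using I1 by (rule ennreal_leI)
  finally show "(\<integral>\<^sup>+\<omega>. ennreal (u \<omega>) \<partial>M) \<le> ennreal (sqrt A)" .
qed



lemma nsdm_fst_cong:
  "(\<And>s. s < t \<Longrightarrow> Gs s = Gs' s) \<Longrightarrow> fst (nsdm sel \<alpha> \<eta> x0 Gs t) = fst (nsdm sel \<alpha> \<eta> x0 Gs' t)"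
proof (cases t)
  case 0 then show ?thesis by simp
next
  case (Suc t')
  assume h: "\<And>s. s < t \<Longrightarrow> Gs s = Gs' s"
  have "nsdm sel \<alpha> \<eta> x0 Gs t' = nsdm sel \<alpha> \<eta> x0 Gs' t'" using h Suc by (intro nsdm_cong) auto
  then show ?thesis unfolding Suc nsdm_Suc_fst by simp
qed

locale nsd_setup =
  fixes N :: "'a::euclidean_space \<Rightarrow> real" and g :: "'a \<Rightarrow> 'a" and M :: "'w measure"
    and F :: "nat \<Rightarrow> 'w \<Rightarrow> 'a \<Rightarrow> real" and G :: "nat \<Rightarrow> 'w \<Rightarrow> 'a \<Rightarrow> 'a"
    and sel :: "nat \<Rightarrow> 'a \<Rightarrow> 'a" and \<alpha> \<eta> \<sigma> L :: real and T :: nat and x0 :: 'a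
  assumes norm: "is_norm N"
    and alpha: "0 < \<alpha>" "\<alpha> < 1" and eta: "0 < \<eta>"
    and sm: "\<forall>x y. dual_norm N (g x - g y) \<le> L * N (x - y)" and L: "L \<ge> 0"
    and P: "prob_space M"
    and F_grad: "\<forall>t<T. \<forall>\<omega>\<in>space M. \<forall>x. (F t \<omega> has_derivative (\<lambda>h. G t \<omega> x \<bullet> h)) (at x)"
    and F_indep: "prob_space.indep_vars M (\<lambda>_. Pi\<^sub>M UNIV (\<lambda>_. borel)) F {..<T}"
    and unbiased: "\<forall>t<T. \<forall>x. integrable M (\<lambda>\<omega>. G t \<omega> x) \<and> (\<integral>\<omega>. G t \<omega> x \<partial>M) = g x"
    and sigma: "0 \<le> \<sigma>"
    and var: "\<forall>t<T. \<forall>x. (\<integral>\<^sup>+\<omega>. ennreal ((dual_norm N (G t \<omega> x - g x))\<^sup>2) \<partial>M) \<le> ennreal (\<sigma>\<^sup>2)"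
    and sel_max: "\<forall>t m. N (sel t m) \<le> 1 \<and> (\<forall>u. N u \<le> 1 \<longrightarrow> m \<bullet> u \<le> m \<bullet> sel t m)"
    and sel_meas: "\<forall>t. sel t \<in> borel_measurable borel"
begin

interpretation prob_space M by (rule P)

abbreviation PU :: "('a \<Rightarrow> real) measure" where "PU \<equiv> Pi\<^sub>M UNIV (\<lambda>_. borel)"
abbreviation PS :: "nat \<Rightarrow> (nat \<Rightarrow> 'a \<Rightarrow> real) measure" where "PS k \<equiv> Pi\<^sub>M {..<k} (\<lambda>_. PU)"

definition "Past k \<omega> = restrict (\<lambda>i. F i \<omega>) {..<k}"
definition "Xp p t = fst (nsdm sel \<alpha> \<eta> x0 (\<lambda>s. Phi (p s)) t)"
definition "Mp p t = snd (nsdm sel \<alpha> \<eta> x0 (\<lambda>s. Phi (p s)) t)"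
definition "xip p s = Phi (p s) (Xp p s) - g (Xp p s)"
definition "Xw \<omega> t = fst (nsdm sel \<alpha> \<eta> x0 (\<lambda>s. G s \<omega>) t)"
definition "xiw \<omega> s = G s \<omega> (Xw \<omega> s) - g (Xw \<omega> s)"

lemma g_cont: "continuous_on UNIV g"
proof -
  obtain C where C: "C > 0" "\<And>x::'a. N x \<le> C * norm x" using isn_upper[OF norm] by blast
  obtain C2 where C2: "C2 > 0" "\<And>x::'a. norm x \<le> C2 * dual_norm N x" using norm_le_dual[OF norm] by blast
  have "norm (g x - g y) \<le> (C2 * L * C) * norm (x - y)" for x y
  proof -
    have "norm (g x - g y) \<le> C2 * dual_norm N (g x - g y)" by (rule C2(2))
    also have "\<dots> \<le> C2 * (L * N (x - y))" using sm C2(1) by (intro mult_left_mono) auto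
    also have "\<dots> \<le> C2 * (L * (C * norm (x - y)))" using C2(1) L C(2) by (intro mult_left_mono) auto
    finally show ?thesis by (simp add: algebra_simps)
  qed
  moreover have "0 \<le> C2 * L * C" using C C2 L by (intro mult_nonneg_nonneg) auto
  ultimately have "(C2 * L * C)-lipschitz_on UNIV g"
    by (intro lipschitz_onI) (auto simp: dist_norm)
  then show ?thesis by (rule lipschitz_on_continuous_on)
qed

lemma g_meas[measurable]: "g \<in> borel_measurable borel"
  using g_cont by (rule borel_measurable_continuous_onI)

lemma sel_meas'[measurable]: "sel t \<in> borel_measurable borel"
  using sel_meas by blast

lemma F_meas: "i < T \<Longrightarrow> F i \<in> measurable M PU"
  using F_indep unfolding indep_vars_def by auto

lemma Past_meas: "k \<le> T \<Longrightarrow> Past k \<in> measurable M (PS k)"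
  unfolding Past_def by (intro measurable_restrict F_meas) auto

lemma comp_meas: "s < k \<Longrightarrow> (\<lambda>p. p s) \<in> measurable (PS k) PU"
  by (rule measurable_component_singleton) auto

lemma Xp_Mp_meas:
  "t < k \<Longrightarrow> (\<lambda>p. Xp p t) \<in> borel_measurable (PS k) \<and> (\<lambda>p. Mp p t) \<in> borel_measurable (PS k)"
proof (induction t)
  case 0
  have "(\<lambda>p. Phi (p 0) x0) \<in> borel_measurable (PS k)"
    by (rule Phi_meas[OF comp_meas[OF 0]]) simp
  then show ?case by (simp add: Xp_def Mp_def)
next
  case (Suc t)
  then have IH: "(\<lambda>p. Xp p t) \<in> borel_measurable (PS k)" "(\<lambda>p. Mp p t) \<in> borel_measurable (PS k)" by auto
  have XS: "(\<lambda>p. Xp p (Suc t)) = (\<lambda>p. Xp p t - \<eta> *\<^sub>R sel t (Mp p t))"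
    unfolding Xp_def Mp_def by (intro ext nsdm_Suc_fst)
  have X: "(\<lambda>p. Xp p (Suc t)) \<in> borel_measurable (PS k)"
    unfolding XS using IH by measurable
  have MS: "(\<lambda>p. Mp p (Suc t)) = (\<lambda>p. (1 - \<alpha>) *\<^sub>R Mp p t + \<alpha> *\<^sub>R Phi (p (Suc t)) (Xp p (Suc t)))"
    unfolding Xp_def Mp_def by (intro ext nsdm_Suc_snd)
  have "(\<lambda>p. Phi (p (Suc t)) (Xp p (Suc t))) \<in> borel_measurable (PS k)"
    by (rule Phi_meas[OF comp_meas[OF Suc.prems] X])
  then have "(\<lambda>p. Mp p (Suc t)) \<in> borel_measurable (PS k)"
    unfolding MS using IH by measurable
  with X show ?case by simp
qed

lemma Xp_meas: "t \<le> k \<Longrightarrow> (\<lambda>p. Xp p t) \<in> borel_measurable (PS k)"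
proof (cases t)
  case 0 then show ?thesis by (simp add: Xp_def)
next
  case (Suc t')
  assume "t \<le> k"
  then have IH: "(\<lambda>p. Xp p t') \<in> borel_measurable (PS k)" "(\<lambda>p. Mp p t') \<in> borel_measurable (PS k)"
    using Xp_Mp_meas[of t' k] Suc by auto
  have XS: "(\<lambda>p. Xp p t) = (\<lambda>p. Xp p t' - \<eta> *\<^sub>R sel t' (Mp p t'))"
    unfolding Xp_def Mp_def Suc by (intro ext nsdm_Suc_fst)
  show ?thesis unfolding XS using IH by measurable
qed

lemma xip_meas: "s < k \<Longrightarrow> (\<lambda>p. xip p s) \<in> borel_measurable (PS k)"
proof -
  assume s: "s < k"
  have X: "(\<lambda>p. Xp p s) \<in> borel_measurable (PS k)" using s by (intro Xp_meas) auto
  have "(\<lambda>p. Phi (p s) (Xp p s)) \<in> borel_measurable (PS k)" by (rule Phi_meas[OF comp_meas[OF s] X])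
  then show ?thesis unfolding xip_def using X by measurable
qed

lemma noise_meas: "t < k \<Longrightarrow> (\<lambda>p. noise \<alpha> (xip p) t) \<in> borel_measurable (PS k) \<and> (\<lambda>p. noiseS \<alpha> (xip p) t) \<in> borel_measurable (PS k)"
proof (induction t)
  case 0 then show ?case using xip_meas[of 0 k] by simp
next
  case (Suc t)
  then have IH: "(\<lambda>p. noise \<alpha> (xip p) t) \<in> borel_measurable (PS k)" "(\<lambda>p. noiseS \<alpha> (xip p) t) \<in> borel_measurable (PS k)" by auto
  have x: "(\<lambda>p. xip p (Suc t)) \<in> borel_measurable (PS k)" by (rule xip_meas[OF Suc.prems])
  show ?case using IH x by simp
qed

lemma PhiF: "s < T \<Longrightarrow> \<omega> \<in> space M \<Longrightarrow> Phi (F s \<omega>) = G s \<omega>"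
  using F_grad Phi_grad by blast

lemma Xw_eq: "k \<le> T \<Longrightarrow> t \<le> k \<Longrightarrow> \<omega> \<in> space M \<Longrightarrow> Xw \<omega> t = Xp (Past k \<omega>) t"
  unfolding Xw_def Xp_def by (rule nsdm_fst_cong) (simp add: Past_def PhiF)

lemma xiw_eq: "k \<le> T \<Longrightarrow> s < k \<Longrightarrow> \<omega> \<in> space M \<Longrightarrow> xiw \<omega> s = xip (Past k \<omega>) s"
  unfolding xiw_def xip_def using Xw_eq[of k s \<omega>] by (simp add: Past_def PhiF)

lemma noise_eq: "k \<le> T \<Longrightarrow> t < k \<Longrightarrow> \<omega> \<in> space M \<Longrightarrow> noise \<alpha> (xiw \<omega>) t = noise \<alpha> (xip (Past k \<omega>)) t"
  by (rule noise_cong) (simp add: xiw_eq)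

lemma noiseS_eq: "k \<le> T \<Longrightarrow> t < k \<Longrightarrow> \<omega> \<in> space M \<Longrightarrow> noiseS \<alpha> (xiw \<omega>) t = noiseS \<alpha> (xip (Past k \<omega>)) t"
  by (rule noiseS_cong) (simp add: xiw_eq)

lemma xiw_measM: "s < T \<Longrightarrow> (\<lambda>\<omega>. xiw \<omega> s) \<in> borel_measurable M"
  by (rule measurable_cong[THEN iffD2, OF xiw_eq[of T s]])
     (auto intro: measurable_compose[OF Past_meas xip_meas])

lemma noise_measM: "t < T \<Longrightarrow> (\<lambda>\<omega>. noise \<alpha> (xiw \<omega>) t) \<in> borel_measurable M"
  by (rule measurable_cong[THEN iffD2, OF noise_eq[of T t]])
     (auto intro: measurable_compose[OF Past_meas] noise_meas[THEN conjunct1])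

lemma noiseS_measM: "t < T \<Longrightarrow> (\<lambda>\<omega>. noiseS \<alpha> (xiw \<omega>) t) \<in> borel_measurable M"
  by (rule measurable_cong[THEN iffD2, OF noiseS_eq[of T t]])
     (auto intro: measurable_compose[OF Past_meas] noise_meas[THEN conjunct2])

end



context nsd_setup
begin

interpretation prob_space M by (rule P)

definition "c1 = (SUP x\<in>-{0}. dual_norm N x / norm x)"
definition "c2 = (SUP x\<in>-{0}. norm x / dual_norm N x)"

lemma psi_eq: "psi N = c1 * c2"
  unfolding psi_def c1_def c2_def by simp

lemma ne_compl0: "-{0::'a} \<noteq> {}"
proof -
  obtain b :: 'a where "b \<in> Basis" using nonempty_Basis by blast
  then have "b \<in> -{0}" by auto
  then show ?thesis by blast
qed

lemma c1_le: "dual_norm N x \<le> c1 * norm x"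
proof -
  obtain C where C: "C > 0" "\<And>x::'a. dual_norm N x \<le> C * norm x" using dual_le_norm[OF norm] by blast
  have bdd: "bdd_above ((\<lambda>x. dual_norm N x / norm x) ` (-{0}))"
    by (rule bdd_aboveI2[where M=C]) (use C in \<open>auto simp: field_simps\<close>)
  show ?thesis
  proof (cases "x = 0")
    case True then show ?thesis using dual_least[OF norm, of 0 0] by simp
  next
    case False
    then have "dual_norm N x / norm x \<le> c1" unfolding c1_def by (intro cSUP_upper bdd) auto
    then show ?thesis using False by (simp add: field_simps)
  qed
qed

lemma dual_pos: "x \<noteq> 0 \<Longrightarrow> dual_norm N x > 0"
proof -
  assume x: "x \<noteq> 0"
  obtain C where C: "C > 0" "\<And>x::'a. norm x \<le> C * dual_norm N x" using norm_le_dual[OF norm] by blast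
  have "0 < norm x" using x by simp
  also have "\<dots> \<le> C * dual_norm N x" by (rule C(2))
  finally show ?thesis using C(1) by (simp add: zero_less_mult_iff)
qed

lemma c2_le: "norm x \<le> c2 * dual_norm N x"
proof -
  obtain C where C: "C > 0" "\<And>x::'a. norm x \<le> C * dual_norm N x" using norm_le_dual[OF norm] by blast
  have bdd: "bdd_above ((\<lambda>x. norm x / dual_norm N x) ` (-{0}))"
  proof (rule bdd_aboveI2[where M=C])
    fix x :: 'a assume "x \<in> -{0}"
    then have "dual_norm N x > 0" using dual_pos by auto
    then show "norm x / dual_norm N x \<le> C" using C(2)[of x] by (simp add: field_simps)
  qed
  show ?thesis
  proof (cases "x = 0")
    case True then show ?thesis using dual_least[OF norm, of 0 0] dual_nonneg[OF norm, of 0] by simp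
  next
    case False
    then have "norm x / dual_norm N x \<le> c2" unfolding c2_def by (intro cSUP_upper bdd) auto
    then show ?thesis using False dual_pos[of x] by (simp add: field_simps)
  qed
qed

lemma c2_nonneg: "c2 \<ge> 0"
proof -
  obtain b :: 'a where "b \<in> Basis" using nonempty_Basis by blast
  then have "b \<noteq> 0" by auto
  then have "0 < norm b" by simp
  also have "\<dots> \<le> c2 * dual_norm N b" by (rule c2_le)
  finally show ?thesis using dual_pos[of b] \<open>b \<noteq> 0\<close> by (simp add: zero_less_mult_iff)
qed

lemma c1_nonneg: "c1 \<ge> 0"
proof -
  obtain b :: 'a where "b \<in> Basis" using nonempty_Basis by blast
  then have "b \<noteq> 0" by auto
  then have "0 < dual_norm N b" by (rule dual_pos)
  also have "\<dots> \<le> c1 * norm b" by (rule c1_le)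
  finally show ?thesis using \<open>b \<noteq> 0\<close> by (simp add: zero_less_mult_iff)
qed

lemma indep_k: "k < T \<Longrightarrow> indep_var (PS k) (Past k) (Pi\<^sub>M {k} (\<lambda>_. PU)) (\<lambda>\<omega>. restrict (\<lambda>i. F i \<omega>) {k})"
  using indep_var_restrict[OF F_indep, of "{..<k}" "{k}"] unfolding Past_def by auto

lemma xi_sq: "s < T \<Longrightarrow> (\<integral>\<^sup>+\<omega>. ennreal ((dual_norm N (xiw \<omega> s))\<^sup>2) \<partial>M) \<le> ennreal (\<sigma>\<^sup>2)"
proof -
  assume s: "s < T"
  define Y where "Y \<omega> = restrict (\<lambda>i. F i \<omega>) {s}" for \<omega>
  define h where "h q = ennreal ((dual_norm N (Phi (snd q s) (Xp (fst q) s) - g (Xp (fst q) s)))\<^sup>2)"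
    for q :: "(nat \<Rightarrow> 'a \<Rightarrow> real) \<times> (nat \<Rightarrow> 'a \<Rightarrow> real)"
  have A: "(\<lambda>q. snd q s) \<in> measurable (PS s \<Otimes>\<^sub>M Pi\<^sub>M {s} (\<lambda>_. PU)) PU"
    by (rule measurable_compose[OF measurable_snd measurable_component_singleton]) auto
  have Yv: "(\<lambda>q. Xp (fst q) s) \<in> borel_measurable (PS s \<Otimes>\<^sub>M Pi\<^sub>M {s} (\<lambda>_. PU))"
    by (rule measurable_compose[OF measurable_fst Xp_meas]) auto
  have Ph: "(\<lambda>q. Phi (snd q s) (Xp (fst q) s)) \<in> borel_measurable (PS s \<Otimes>\<^sub>M Pi\<^sub>M {s} (\<lambda>_. PU))"
    by (rule Phi_meas[OF A Yv])
  have hm: "h \<in> borel_measurable (PS s \<Otimes>\<^sub>M Pi\<^sub>M {s} (\<lambda>_. PU))"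
    unfolding h_def using Ph Yv dual_measurable[OF norm] by measurable
  have "(\<integral>\<^sup>+\<omega>. h (Past s \<omega>, Y \<omega>) \<partial>M) \<le> ennreal (\<sigma>\<^sup>2)"
  proof (rule indep_nn_bound[OF indep_k[OF s, folded Y_def] hm])
    fix x assume "x \<in> space (PS s)"
    have "(\<integral>\<^sup>+\<omega>. h (x, Y \<omega>) \<partial>M) = (\<integral>\<^sup>+\<omega>. ennreal ((dual_norm N (G s \<omega> (Xp x s) - g (Xp x s)))\<^sup>2) \<partial>M)"
      by (intro nn_integral_cong) (simp add: h_def Y_def PhiF[OF s])
    also have "\<dots> \<le> ennreal (\<sigma>\<^sup>2)" using var s by blast
    finally show "(\<integral>\<^sup>+\<omega>. h (x, Y \<omega>) \<partial>M) \<le> ennreal (\<sigma>\<^sup>2)" .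
  qed
  also have "(\<integral>\<^sup>+\<omega>. h (Past s \<omega>, Y \<omega>) \<partial>M) = (\<integral>\<^sup>+\<omega>. ennreal ((dual_norm N (xiw \<omega> s))\<^sup>2) \<partial>M)"
  proof (intro nn_integral_cong)
    fix \<omega> assume w: "\<omega> \<in> space M"
    have "Xw \<omega> s = Xp (Past s \<omega>) s" using Xw_eq[of s s \<omega>] s w by simp
    then show "h (Past s \<omega>, Y \<omega>) = ennreal ((dual_norm N (xiw \<omega> s))\<^sup>2)"
      by (simp add: h_def Y_def xiw_def PhiF[OF s w])
  qed
  finally show ?thesis .
qed

lemma xi_L1: "s < T \<Longrightarrow> integrable M (\<lambda>\<omega>. dual_norm N (xiw \<omega> s)) \<and> (\<integral>\<omega>. dual_norm N (xiw \<omega> s) \<partial>M) \<le> \<sigma>"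
proof -
  assume s: "s < T"
  have m: "(\<lambda>\<omega>. dual_norm N (xiw \<omega> s)) \<in> borel_measurable M"
    using xiw_measM[OF s] dual_measurable[OF norm] by measurable
  note L = L2_L1[OF m dual_nonneg[OF norm] _ xi_sq[OF s]]
  show ?thesis using L(2) L(4) sigma by simp
qed

lemma xi_norm_sq: "s < T \<Longrightarrow> integrable M (\<lambda>\<omega>. (norm (xiw \<omega> s))\<^sup>2) \<and> (\<integral>\<omega>. (norm (xiw \<omega> s))\<^sup>2 \<partial>M) \<le> c2\<^sup>2 * \<sigma>\<^sup>2"
proof -
  assume s: "s < T"
  have m: "(\<lambda>\<omega>. norm (xiw \<omega> s)) \<in> borel_measurable M"
    using xiw_measM[OF s] by measurable
  have m2: "(\<lambda>\<omega>. (dual_norm N (xiw \<omega> s))\<^sup>2) \<in> borel_measurable M"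
    using xiw_measM[OF s] dual_measurable[OF norm] by measurable
  have "(\<integral>\<^sup>+\<omega>. ennreal ((norm (xiw \<omega> s))\<^sup>2) \<partial>M) \<le> (\<integral>\<^sup>+\<omega>. ennreal (c2\<^sup>2) * ennreal ((dual_norm N (xiw \<omega> s))\<^sup>2) \<partial>M)"
  proof (intro nn_integral_mono)
    fix \<omega>
    have "norm (xiw \<omega> s) \<le> c2 * dual_norm N (xiw \<omega> s)" by (rule c2_le)
    then have "(norm (xiw \<omega> s))\<^sup>2 \<le> (c2 * dual_norm N (xiw \<omega> s))\<^sup>2" by (intro power_mono) auto
    then show "ennreal ((norm (xiw \<omega> s))\<^sup>2) \<le> ennreal (c2\<^sup>2) * ennreal ((dual_norm N (xiw \<omega> s))\<^sup>2)"
      by (simp add: ennreal_mult'[symmetric] power_mult_distrib)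
  qed
  also have "\<dots> = ennreal (c2\<^sup>2) * (\<integral>\<^sup>+\<omega>. ennreal ((dual_norm N (xiw \<omega> s))\<^sup>2) \<partial>M)"
    using m2 by (intro nn_integral_cmult) auto
  also have "\<dots> \<le> ennreal (c2\<^sup>2) * ennreal (\<sigma>\<^sup>2)" by (intro mult_left_mono xi_sq[OF s]) auto
  also have "\<dots> = ennreal (c2\<^sup>2 * \<sigma>\<^sup>2)" by (simp add: ennreal_mult')
  finally have b: "(\<integral>\<^sup>+\<omega>. ennreal ((norm (xiw \<omega> s))\<^sup>2) \<partial>M) \<le> ennreal (c2\<^sup>2 * \<sigma>\<^sup>2)" .
  note L = L2_L1[OF m norm_ge_zero _ b]
  show ?thesis using L(1) L(3) by simp
qed

end



context nsd_setup
begin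

interpretation prob_space M by (rule P)

lemma norm_comb_sq:
  fixes x y :: "'b::real_inner"
  shows "(norm (a *\<^sub>R x + b *\<^sub>R y))\<^sup>2 = a\<^sup>2 * (norm x)\<^sup>2 + b\<^sup>2 * (norm y)\<^sup>2 + (2 * a * b) * (x \<bullet> y)"
  unfolding power2_norm_eq_inner
  by (simp add: inner_add_left inner_add_right inner_commute algebra_simps power2_eq_square)

lemma cross_zero:
  assumes t: "Suc t < T" and int: "integrable M (\<lambda>\<omega>. noiseS \<alpha> (xiw \<omega>) t \<bullet> xiw \<omega> (Suc t))"
  shows "(\<integral>\<omega>. noiseS \<alpha> (xiw \<omega>) t \<bullet> xiw \<omega> (Suc t) \<partial>M) = 0"
proof -
  define k where "k = Suc t"
  have k: "k < T" "t < k" using t unfolding k_def by auto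
  define Y where "Y \<omega> = restrict (\<lambda>i. F i \<omega>) {k}" for \<omega>
  define h where "h q = noiseS \<alpha> (xip (fst q)) t \<bullet> (Phi (snd q k) (Xp (fst q) k) - g (Xp (fst q) k))"
    for q :: "(nat \<Rightarrow> 'a \<Rightarrow> real) \<times> (nat \<Rightarrow> 'a \<Rightarrow> real)"
  have A: "(\<lambda>q. snd q k) \<in> measurable (PS k \<Otimes>\<^sub>M Pi\<^sub>M {k} (\<lambda>_. PU)) PU"
    by (rule measurable_compose[OF measurable_snd measurable_component_singleton]) auto
  have Yv: "(\<lambda>q. Xp (fst q) k) \<in> borel_measurable (PS k \<Otimes>\<^sub>M Pi\<^sub>M {k} (\<lambda>_. PU))"
    by (rule measurable_compose[OF measurable_fst Xp_meas]) auto
  have Sv: "(\<lambda>q. noiseS \<alpha> (xip (fst q)) t) \<in> borel_measurable (PS k \<Otimes>\<^sub>M Pi\<^sub>M {k} (\<lambda>_. PU))"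
    by (rule measurable_compose[OF measurable_fst noise_meas[THEN conjunct2]]) (use k in auto)
  have Ph: "(\<lambda>q. Phi (snd q k) (Xp (fst q) k)) \<in> borel_measurable (PS k \<Otimes>\<^sub>M Pi\<^sub>M {k} (\<lambda>_. PU))"
    by (rule Phi_meas[OF A Yv])
  have hm: "h \<in> borel_measurable (PS k \<Otimes>\<^sub>M Pi\<^sub>M {k} (\<lambda>_. PU))"
    unfolding h_def using Ph Yv Sv by measurable
  have kk: "Suc t = k" unfolding k_def by simp
  have eq: "h (Past k \<omega>, Y \<omega>) = noiseS \<alpha> (xiw \<omega>) t \<bullet> xiw \<omega> k" if w: "\<omega> \<in> space M" for \<omega>
  proof -
    have "Xw \<omega> k = Xp (Past k \<omega>) k" using Xw_eq[of k k \<omega>] k w by simp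
    moreover have "noiseS \<alpha> (xiw \<omega>) t = noiseS \<alpha> (xip (Past k \<omega>)) t" using noiseS_eq[of k t \<omega>] k w by simp
    ultimately show ?thesis by (simp add: h_def Y_def xiw_def PhiF[OF k(1) w])
  qed
  have int2: "integrable M (\<lambda>\<omega>. h (Past k \<omega>, Y \<omega>))"
  proof -
    have "integrable M (\<lambda>\<omega>. h (Past k \<omega>, Y \<omega>)) \<longleftrightarrow> integrable M (\<lambda>\<omega>. noiseS \<alpha> (xiw \<omega>) t \<bullet> xiw \<omega> k)"
      by (rule Bochner_Integration.integrable_cong) (simp_all add: eq)
    then show ?thesis using int unfolding kk by simp
  qed
  have "(\<integral>\<omega>. h (Past k \<omega>, Y \<omega>) \<partial>M) = 0"
  proof (rule indep_int_zero[OF indep_k[OF k(1), folded Y_def] hm int2])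
    fix x assume "x \<in> space (PS k)"
    define z where "z = noiseS \<alpha> (xip x) t"
    define w where "w = Xp x k"
    have iG: "integrable M (\<lambda>\<omega>. G k \<omega> w)" and eG: "(\<integral>\<omega>. G k \<omega> w \<partial>M) = g w" using unbiased k by auto
    have "(\<integral>\<omega>. h (x, Y \<omega>) \<partial>M) = (\<integral>\<omega>. z \<bullet> G k \<omega> w - z \<bullet> g w \<partial>M)"
      by (intro Bochner_Integration.integral_cong) (simp_all add: h_def Y_def PhiF[OF k(1)] z_def w_def inner_diff_right)
    also have "\<dots> = (\<integral>\<omega>. z \<bullet> G k \<omega> w \<partial>M) - z \<bullet> g w"
      using iG by (subst Bochner_Integration.integral_diff) (auto simp: prob_space)
    also have "\<dots> = 0" using iG eG by simp
    finally show "(\<integral>\<omega>. h (x, Y \<omega>) \<partial>M) = 0" .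
  qed
  then show ?thesis unfolding kk by (subst (asm) Bochner_Integration.integral_cong[OF refl eq]) auto
qed

lemma S_sq: "t < T \<Longrightarrow> integrable M (\<lambda>\<omega>. (norm (noiseS \<alpha> (xiw \<omega>) t))\<^sup>2) \<and>
    (\<integral>\<omega>. (norm (noiseS \<alpha> (xiw \<omega>) t))\<^sup>2 \<partial>M) \<le> \<alpha> * (c2\<^sup>2 * \<sigma>\<^sup>2)"
proof (induction t)
  case 0 then show ?case using alpha by simp
next
  case (Suc t)
  define B where "B = c2\<^sup>2 * \<sigma>\<^sup>2"
  have B0: "B \<ge> 0" unfolding B_def by simp
  define S where "S \<omega> = noiseS \<alpha> (xiw \<omega>) t" for \<omega>
  define xi where "xi \<omega> = xiw \<omega> (Suc t)" for \<omega>
  have IH: "integrable M (\<lambda>\<omega>. (norm (S \<omega>))\<^sup>2)" "(\<integral>\<omega>. (norm (S \<omega>))\<^sup>2 \<partial>M) \<le> \<alpha> * B"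
    using Suc unfolding S_def B_def by auto
  have X: "integrable M (\<lambda>\<omega>. (norm (xi \<omega>))\<^sup>2)" "(\<integral>\<omega>. (norm (xi \<omega>))\<^sup>2 \<partial>M) \<le> B"
    using xi_norm_sq[OF Suc.prems] unfolding xi_def B_def by auto
  have Sm: "S \<in> borel_measurable M" unfolding S_def using noiseS_measM Suc.prems by simp
  have xm: "xi \<in> borel_measurable M" unfolding xi_def using xiw_measM Suc.prems by simp
  have ic: "integrable M (\<lambda>\<omega>. S \<omega> \<bullet> xi \<omega>)"
  proof (rule Bochner_Integration.integrable_bound[where f="\<lambda>\<omega>. (norm (S \<omega>))\<^sup>2 + (norm (xi \<omega>))\<^sup>2"])
    show "integrable M (\<lambda>\<omega>. (norm (S \<omega>))\<^sup>2 + (norm (xi \<omega>))\<^sup>2)" using IH(1) X(1) by simp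
    show "(\<lambda>\<omega>. S \<omega> \<bullet> xi \<omega>) \<in> borel_measurable M" using Sm xm by measurable
    show "AE \<omega> in M. norm (S \<omega> \<bullet> xi \<omega>) \<le> norm ((norm (S \<omega>))\<^sup>2 + (norm (xi \<omega>))\<^sup>2)"
    proof (rule AE_I2)
      fix \<omega>
      have "\<bar>S \<omega> \<bullet> xi \<omega>\<bar> \<le> norm (S \<omega>) * norm (xi \<omega>)" by (rule Cauchy_Schwarz_ineq2)
      also have "\<dots> \<le> (norm (S \<omega>))\<^sup>2 + (norm (xi \<omega>))\<^sup>2"
      proof -
        have "0 \<le> (norm (S \<omega>) - norm (xi \<omega>))\<^sup>2" by simp
        then have "2 * (norm (S \<omega>) * norm (xi \<omega>)) \<le> (norm (S \<omega>))\<^sup>2 + (norm (xi \<omega>))\<^sup>2"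
          by (simp add: power2_eq_square algebra_simps)
        moreover have "0 \<le> norm (S \<omega>) * norm (xi \<omega>)" by simp
        ultimately show ?thesis by linarith
      qed
      finally show "norm (S \<omega> \<bullet> xi \<omega>) \<le> norm ((norm (S \<omega>))\<^sup>2 + (norm (xi \<omega>))\<^sup>2)" by simp
    qed
  qed
  have cz: "(\<integral>\<omega>. S \<omega> \<bullet> xi \<omega> \<partial>M) = 0"
    using cross_zero[OF Suc.prems] ic unfolding S_def xi_def by simp
  have expand: "(norm (noiseS \<alpha> (xiw \<omega>) (Suc t)))\<^sup>2 =
      (1 - \<alpha>)\<^sup>2 * (norm (S \<omega>))\<^sup>2 + \<alpha>\<^sup>2 * (norm (xi \<omega>))\<^sup>2 + (2 * (1 - \<alpha>) * \<alpha>) * (S \<omega> \<bullet> xi \<omega>)" for \<omega>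
    unfolding S_def xi_def noiseS.simps by (rule norm_comb_sq)
  have i3: "integrable M (\<lambda>\<omega>. (1 - \<alpha>)\<^sup>2 * (norm (S \<omega>))\<^sup>2 + \<alpha>\<^sup>2 * (norm (xi \<omega>))\<^sup>2 + (2 * (1 - \<alpha>) * \<alpha>) * (S \<omega> \<bullet> xi \<omega>))"
    using IH(1) X(1) ic by simp
  have int: "integrable M (\<lambda>\<omega>. (norm (noiseS \<alpha> (xiw \<omega>) (Suc t)))\<^sup>2)"
    unfolding expand by (rule i3)
  have "(\<integral>\<omega>. (norm (noiseS \<alpha> (xiw \<omega>) (Suc t)))\<^sup>2 \<partial>M)
      = (1 - \<alpha>)\<^sup>2 * (\<integral>\<omega>. (norm (S \<omega>))\<^sup>2 \<partial>M) + \<alpha>\<^sup>2 * (\<integral>\<omega>. (norm (xi \<omega>))\<^sup>2 \<partial>M) + (2 * (1 - \<alpha>) * \<alpha>) * (\<integral>\<omega>. S \<omega> \<bullet> xi \<omega> \<partial>M)"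
    unfolding expand using IH(1) X(1) ic by simp
  also have "\<dots> \<le> (1 - \<alpha>)\<^sup>2 * (\<alpha> * B) + \<alpha>\<^sup>2 * B"
    unfolding cz using IH(2) X(2) by (simp add: add_mono mult_left_mono)
  also have "\<dots> \<le> \<alpha> * B"
  proof -
    have "(1 - \<alpha>)\<^sup>2 * \<alpha> + \<alpha>\<^sup>2 \<le> \<alpha>"
    proof -
      have "(1 - \<alpha>)\<^sup>2 * \<alpha> + \<alpha>\<^sup>2 = \<alpha> - \<alpha>\<^sup>2 * (1 - \<alpha>)" by (simp add: power2_eq_square algebra_simps)
      also have "\<dots> \<le> \<alpha>" using alpha by simp
      finally show ?thesis .
    qed
    then have "((1 - \<alpha>)\<^sup>2 * \<alpha> + \<alpha>\<^sup>2) * B \<le> \<alpha> * B" using B0 by (rule mult_right_mono)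
    then show ?thesis by (simp add: algebra_simps)
  qed
  finally show ?case using int unfolding B_def by simp
qed

lemma S_L1a: "t < T \<Longrightarrow> integrable M (\<lambda>\<omega>. dual_norm N (noiseS \<alpha> (xiw \<omega>) t)) \<and>
    (\<integral>\<omega>. dual_norm N (noiseS \<alpha> (xiw \<omega>) t) \<partial>M) \<le> \<sigma>"
proof (induction t)
  case 0 then show ?case using sigma dual_least[OF norm, of 0 0] dual_nonneg[OF norm, of 0] by simp
next
  case (Suc t)
  define S where "S \<omega> = noiseS \<alpha> (xiw \<omega>) t" for \<omega>
  define xi where "xi \<omega> = xiw \<omega> (Suc t)" for \<omega>
  have IH: "integrable M (\<lambda>\<omega>. dual_norm N (S \<omega>))" "(\<integral>\<omega>. dual_norm N (S \<omega>) \<partial>M) \<le> \<sigma>"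
    using Suc unfolding S_def by auto
  have X: "integrable M (\<lambda>\<omega>. dual_norm N (xi \<omega>))" "(\<integral>\<omega>. dual_norm N (xi \<omega>) \<partial>M) \<le> \<sigma>"
    using xi_L1[OF Suc.prems] unfolding xi_def by auto
  have bnd: "dual_norm N (noiseS \<alpha> (xiw \<omega>) (Suc t)) \<le> (1 - \<alpha>) * dual_norm N (S \<omega>) + \<alpha> * dual_norm N (xi \<omega>)" for \<omega>
    using dual_triangle[OF norm, of "(1 - \<alpha>) *\<^sub>R S \<omega>" "\<alpha> *\<^sub>R xi \<omega>"]
      dual_scale[OF norm, of "1 - \<alpha>" "S \<omega>"] dual_scale[OF norm, of \<alpha> "xi \<omega>"] alpha
    unfolding S_def xi_def by simp
  have ib: "integrable M (\<lambda>\<omega>. (1 - \<alpha>) * dual_norm N (S \<omega>) + \<alpha> * dual_norm N (xi \<omega>))"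
    using IH(1) X(1) by simp
  have m: "(\<lambda>\<omega>. dual_norm N (noiseS \<alpha> (xiw \<omega>) (Suc t))) \<in> borel_measurable M"
    using noiseS_measM[OF Suc.prems] dual_measurable[OF norm] by measurable
  have int: "integrable M (\<lambda>\<omega>. dual_norm N (noiseS \<alpha> (xiw \<omega>) (Suc t)))"
  proof (rule Bochner_Integration.integrable_bound[OF ib m AE_I2])
    fix \<omega>
    have "0 \<le> (1 - \<alpha>) * dual_norm N (S \<omega>) + \<alpha> * dual_norm N (xi \<omega>)"
      using alpha dual_nonneg[OF norm] by simp
    then show "norm (dual_norm N (noiseS \<alpha> (xiw \<omega>) (Suc t))) \<le> norm ((1 - \<alpha>) * dual_norm N (S \<omega>) + \<alpha> * dual_norm N (xi \<omega>))"
      using bnd[of \<omega>] dual_nonneg[OF norm] by simp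
  qed
  have "(\<integral>\<omega>. dual_norm N (noiseS \<alpha> (xiw \<omega>) (Suc t)) \<partial>M) \<le> (\<integral>\<omega>. (1 - \<alpha>) * dual_norm N (S \<omega>) + \<alpha> * dual_norm N (xi \<omega>) \<partial>M)"
    by (rule Bochner_Integration.integral_mono[OF int ib bnd])
  also have "\<dots> = (1 - \<alpha>) * (\<integral>\<omega>. dual_norm N (S \<omega>) \<partial>M) + \<alpha> * (\<integral>\<omega>. dual_norm N (xi \<omega>) \<partial>M)"
    using IH(1) X(1) by simp
  also have "\<dots> \<le> (1 - \<alpha>) * \<sigma> + \<alpha> * \<sigma>"
    using IH(2) X(2) alpha by (intro add_mono mult_left_mono) auto
  also have "\<dots> = \<sigma>" by (simp add: algebra_simps)
  finally show ?case using int by simp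
qed

lemma S_L1b: "t < T \<Longrightarrow> (\<integral>\<omega>. dual_norm N (noiseS \<alpha> (xiw \<omega>) t) \<partial>M) \<le> sqrt \<alpha> * psi N * \<sigma>"
proof -
  assume t: "t < T"
  define u where "u \<omega> = norm (noiseS \<alpha> (xiw \<omega>) t)" for \<omega>
  have um: "u \<in> borel_measurable M" unfolding u_def using noiseS_measM[OF t] by measurable
  have s2: "integrable M (\<lambda>\<omega>. (u \<omega>)\<^sup>2)" "(\<integral>\<omega>. (u \<omega>)\<^sup>2 \<partial>M) \<le> \<alpha> * (c2\<^sup>2 * \<sigma>\<^sup>2)"
    using S_sq[OF t] unfolding u_def by auto
  have "(\<integral>\<^sup>+\<omega>. ennreal ((u \<omega>)\<^sup>2) \<partial>M) = ennreal (\<integral>\<omega>. (u \<omega>)\<^sup>2 \<partial>M)"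
    using s2(1) by (subst nn_integral_eq_integral) auto
  also have "\<dots> \<le> ennreal (\<alpha> * (c2\<^sup>2 * \<sigma>\<^sup>2))" using s2(2) by (rule ennreal_leI)
  finally have b: "(\<integral>\<^sup>+\<omega>. ennreal ((u \<omega>)\<^sup>2) \<partial>M) \<le> ennreal (\<alpha> * (c2\<^sup>2 * \<sigma>\<^sup>2))" .
  have a0: "0 \<le> \<alpha> * (c2\<^sup>2 * \<sigma>\<^sup>2)" using alpha by simp
  note L = L2_L1[OF um _ a0 b]
  have iu: "integrable M u" and Iu: "integral\<^sup>L M u \<le> sqrt (\<alpha> * (c2\<^sup>2 * \<sigma>\<^sup>2))"
    using L(2,4) unfolding u_def by auto
  have sq: "sqrt (\<alpha> * (c2\<^sup>2 * \<sigma>\<^sup>2)) = sqrt \<alpha> * c2 * \<sigma>"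
    using c2_nonneg sigma by (simp add: real_sqrt_mult)
  have id: "integrable M (\<lambda>\<omega>. dual_norm N (noiseS \<alpha> (xiw \<omega>) t))" using S_L1a[OF t] by simp
  have icu: "integrable M (\<lambda>\<omega>. c1 * u \<omega>)" using iu by simp
  have "(\<integral>\<omega>. dual_norm N (noiseS \<alpha> (xiw \<omega>) t) \<partial>M) \<le> (\<integral>\<omega>. c1 * u \<omega> \<partial>M)"
    by (rule Bochner_Integration.integral_mono[OF id icu]) (simp add: u_def c1_le)
  also have "\<dots> = c1 * integral\<^sup>L M u" by simp
  also have "\<dots> \<le> c1 * (sqrt \<alpha> * c2 * \<sigma>)" using Iu sq c1_nonneg by (simp add: mult_left_mono)
  also have "\<dots> = sqrt \<alpha> * psi N * \<sigma>" by (simp add: psi_eq)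
  finally show ?thesis .
qed

lemma noise_L1: "t < T \<Longrightarrow> integrable M (\<lambda>\<omega>. dual_norm N (noise \<alpha> (xiw \<omega>) t)) \<and>
    (\<integral>\<omega>. dual_norm N (noise \<alpha> (xiw \<omega>) t) \<partial>M) \<le> (1 - \<alpha>) ^ t * \<sigma> + min \<sigma> (sqrt \<alpha> * psi N * \<sigma>)"
proof -
  assume t: "t < T"
  define S where "S \<omega> = noiseS \<alpha> (xiw \<omega>) t" for \<omega>
  define x0' where "x0' \<omega> = xiw \<omega> 0" for \<omega>
  have T0: "0 < T" using t by simp
  have IS: "integrable M (\<lambda>\<omega>. dual_norm N (S \<omega>))" "(\<integral>\<omega>. dual_norm N (S \<omega>) \<partial>M) \<le> \<sigma>"
    "(\<integral>\<omega>. dual_norm N (S \<omega>) \<partial>M) \<le> sqrt \<alpha> * psi N * \<sigma>"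
    using S_L1a[OF t] S_L1b[OF t] unfolding S_def by auto
  have X: "integrable M (\<lambda>\<omega>. dual_norm N (x0' \<omega>))" "(\<integral>\<omega>. dual_norm N (x0' \<omega>) \<partial>M) \<le> \<sigma>"
    using xi_L1[OF T0] unfolding x0'_def by auto
  have ca: "(1 - \<alpha>) ^ t \<ge> 0" using alpha by simp
  have bnd: "dual_norm N (noise \<alpha> (xiw \<omega>) t) \<le> dual_norm N (S \<omega>) + (1 - \<alpha>) ^ t * dual_norm N (x0' \<omega>)" for \<omega>
    using dual_triangle[OF norm, of "S \<omega>" "(1 - \<alpha>) ^ t *\<^sub>R x0' \<omega>"] dual_scale[OF norm ca, of "x0' \<omega>"]
    unfolding S_def x0'_def noise_split by simp
  have ib: "integrable M (\<lambda>\<omega>. dual_norm N (S \<omega>) + (1 - \<alpha>) ^ t * dual_norm N (x0' \<omega>))"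
    using IS(1) X(1) by simp
  have m: "(\<lambda>\<omega>. dual_norm N (noise \<alpha> (xiw \<omega>) t)) \<in> borel_measurable M"
    using noise_measM[OF t] dual_measurable[OF norm] by measurable
  have int: "integrable M (\<lambda>\<omega>. dual_norm N (noise \<alpha> (xiw \<omega>) t))"
  proof (rule Bochner_Integration.integrable_bound[OF ib m AE_I2])
    fix \<omega>
    have "0 \<le> dual_norm N (S \<omega>) + (1 - \<alpha>) ^ t * dual_norm N (x0' \<omega>)"
      using ca dual_nonneg[OF norm] by simp
    then show "norm (dual_norm N (noise \<alpha> (xiw \<omega>) t)) \<le> norm (dual_norm N (S \<omega>) + (1 - \<alpha>) ^ t * dual_norm N (x0' \<omega>))"
      using bnd[of \<omega>] dual_nonneg[OF norm] by simp
  qed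
  have "(\<integral>\<omega>. dual_norm N (noise \<alpha> (xiw \<omega>) t) \<partial>M) \<le> (\<integral>\<omega>. dual_norm N (S \<omega>) + (1 - \<alpha>) ^ t * dual_norm N (x0' \<omega>) \<partial>M)"
    by (rule Bochner_Integration.integral_mono[OF int ib bnd])
  also have "\<dots> = (\<integral>\<omega>. dual_norm N (S \<omega>) \<partial>M) + (1 - \<alpha>) ^ t * (\<integral>\<omega>. dual_norm N (x0' \<omega>) \<partial>M)"
    using IS(1) X(1) by simp
  also have "\<dots> \<le> min \<sigma> (sqrt \<alpha> * psi N * \<sigma>) + (1 - \<alpha>) ^ t * \<sigma>"
    using IS(2,3) X(2) ca by (intro add_mono mult_left_mono) auto
  finally show ?thesis using int by simp
qed

end



lemma smooth_const_props:
  assumes n: "is_norm N" and Lf: "\<exists>L. \<forall>x y. dual_norm N (g x - g y) \<le> L * N (x - y)"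
  shows "smooth_const N g \<ge> 0" "\<forall>x y. dual_norm N (g x - g y) \<le> smooth_const N g * N (x - y)"
proof -
  define Ls where "Ls = {L. \<forall>x y. dual_norm N (g x - g y) \<le> L * N (x - y)}"
  have ne: "Ls \<noteq> {}" using Lf unfolding Ls_def by blast
  have pos: "0 \<le> L" if "L \<in> Ls" for L
  proof -
    obtain b :: 'a where "b \<in> Basis" using nonempty_Basis by blast
    then have b0: "b \<noteq> 0" by auto
    then have Nb: "N b > 0" using isnD(1)[OF n, of b] isn_nonneg[OF n, of b] by linarith
    have "0 \<le> dual_norm N (g b - g 0)" by (rule dual_nonneg[OF n])
    also have "\<dots> \<le> L * N (b - 0)" using that unfolding Ls_def by blast
    finally show ?thesis using Nb by (simp add: zero_le_mult_iff)
  qed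
  have sc: "smooth_const N g = Inf Ls" unfolding smooth_const_def Ls_def by simp
  show "smooth_const N g \<ge> 0" unfolding sc by (rule cInf_greatest[OF ne pos])
  show "\<forall>x y. dual_norm N (g x - g y) \<le> smooth_const N g * N (x - y)"
  proof (intro allI)
    fix x y
    show "dual_norm N (g x - g y) \<le> smooth_const N g * N (x - y)"
    proof (cases "x = y")
      case True
      then show ?thesis using dual_least[OF n, of 0 0] isn_zero[OF n] by simp
    next
      case False
      then have Np: "N (x - y) > 0" using isnD(1)[OF n, of "x - y"] isn_nonneg[OF n, of "x - y"] by auto
      have "dual_norm N (g x - g y) / N (x - y) \<le> Inf Ls"
      proof (rule cInf_greatest[OF ne])
        fix L assume "L \<in> Ls"
        then have "dual_norm N (g x - g y) \<le> L * N (x - y)" unfolding Ls_def by blast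
        then show "dual_norm N (g x - g y) / N (x - y) \<le> L" using Np by (simp add: field_simps)
      qed
      then show ?thesis unfolding sc using Np by (simp add: field_simps)
    qed
  qed
qed

theorem theorem4p3:
  fixes N :: "'a::euclidean_space \<Rightarrow> real"
    and f :: "'a \<Rightarrow> real" and g :: "'a \<Rightarrow> 'a"
    and M :: "'w measure"
    and F :: "nat \<Rightarrow> 'w \<Rightarrow> 'a \<Rightarrow> real" and G :: "nat \<Rightarrow> 'w \<Rightarrow> 'a \<Rightarrow> 'a"
    and sel :: "nat \<Rightarrow> 'a \<Rightarrow> 'a"
    and \<alpha> \<eta> \<sigma> :: real and T :: nat and x0 :: "'a"
  assumes norm: "is_norm N"
    and alpha: "0 < \<alpha>" "\<alpha> < 1" and eta: "0 < \<eta>"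
    and f_grad: "\<forall>x. (f has_derivative (\<lambda>h. g x \<bullet> h)) (at x)"
    and f_bdd: "bdd_below (range f)"
    and L_finite: "\<exists>L. \<forall>x y. dual_norm N (g x - g y) \<le> L * N (x - y)"
    and P: "prob_space M"
    and F_grad: "\<forall>t<T. \<forall>\<omega>\<in>space M. \<forall>x. (F t \<omega> has_derivative (\<lambda>h. G t \<omega> x \<bullet> h)) (at x)"
    and F_meas: "\<forall>t<T. (\<lambda>(\<omega>, x). F t \<omega> x) \<in> borel_measurable (M \<Otimes>\<^sub>M borel)"
    and F_indep: "prob_space.indep_vars M (\<lambda>_. Pi\<^sub>M UNIV (\<lambda>_. borel)) F {..<T}"
    and unbiased: "\<forall>t<T. \<forall>x. integrable M (\<lambda>\<omega>. G t \<omega> x) \<and> (\<integral>\<omega>. G t \<omega> x \<partial>M) = g x"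
    and sigma: "0 \<le> \<sigma>"
    and var: "\<forall>t<T. \<forall>x. (\<integral>\<^sup>+\<omega>. ennreal ((dual_norm N (G t \<omega> x - g x))\<^sup>2) \<partial>M) \<le> ennreal (\<sigma>\<^sup>2)"
    and sel_max: "\<forall>t m. N (sel t m) \<le> 1 \<and> (\<forall>u. N u \<le> 1 \<longrightarrow> m \<bullet> u \<le> m \<bullet> sel t m)"
    and sel_meas: "\<forall>t. sel t \<in> borel_measurable borel"
  shows "(\<integral>\<^sup>+\<omega>. ennreal ((1 / real T) *
            (\<Sum>t<T. dual_norm N (g (fst (nsdm sel \<alpha> \<eta> x0 (\<lambda>s. G s \<omega>) t))))) \<partial>M)
         \<le> ennreal ((f x0 - Inf (range f)) / (\<eta> * real T)
              + 2 * \<eta> / \<alpha> * smooth_const N g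
              + 2 / (\<alpha> * real T) * \<sigma>
              + 2 * \<sigma> * min 1 (sqrt \<alpha> * psi N))"
proof -
  interpret prob_space M by (rule P)
  define L where "L = smooth_const N g"
  have L0: "L \<ge> 0" and sm: "\<forall>x y. dual_norm N (g x - g y) \<le> L * N (x - y)"
    using smooth_const_props[OF norm L_finite] unfolding L_def by auto
  interpret S: nsd_setup N g M F G sel \<alpha> \<eta> \<sigma> L T x0
    by unfold_locales (use norm alpha eta sm L0 P F_grad F_indep unbiased sigma var sel_max sel_meas in auto)
  show ?thesis
  proof (cases "T = 0")
    case True then show ?thesis by simp
  next
    case False
    then have Tp: "real T > 0" by simp
    define B where "B = Inf (range f)"
    have fB: "B \<le> f x" for x unfolding B_def by (rule cInf_lower[OF _ f_bdd]) auto
    define mm where "mm = min \<sigma> (sqrt \<alpha> * psi N * \<sigma>)"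
    define K where "K = (f x0 - B) / (\<eta> * real T) + 2 * \<eta> / \<alpha> * L"
    define nu where "nu \<omega> t = dual_norm N (noise \<alpha> (S.xiw \<omega>) t)" for \<omega> t
    have pw: "(1 / real T) * (\<Sum>t<T. dual_norm N (g (fst (nsdm sel \<alpha> \<eta> x0 (\<lambda>s. G s \<omega>) t))))
        \<le> K + (2 / real T) * (\<Sum>t<T. nu \<omega> t)" for \<omega>
    proof -
      have d: "(\<Sum>t<T. dual_norm N (g (fst (nsdm sel \<alpha> \<eta> x0 (\<lambda>s. G s \<omega>) t))))
         \<le> (f x0 - B) / \<eta> + real T * (2 * L * \<eta> / \<alpha>) + 2 * (\<Sum>t<T. nu \<omega> t)"
      proof -
        have xf: "S.xiw \<omega> = (\<lambda>s. G s \<omega> (fst (nsdm sel \<alpha> \<eta> x0 (\<lambda>s. G s \<omega>) s)) - g (fst (nsdm sel \<alpha> \<eta> x0 (\<lambda>s. G s \<omega>) s)))"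
          by (rule ext) (simp add: S.xiw_def S.Xw_def)
        show ?thesis unfolding nu_def xf by (rule deterministic[OF norm L0 alpha eta f_grad sm fB sel_max])
      qed
      have "(1 / real T) * (\<Sum>t<T. dual_norm N (g (fst (nsdm sel \<alpha> \<eta> x0 (\<lambda>s. G s \<omega>) t))))
          \<le> (1 / real T) * ((f x0 - B) / \<eta> + real T * (2 * L * \<eta> / \<alpha>) + 2 * (\<Sum>t<T. nu \<omega> t))"
        using d Tp by (intro mult_left_mono) auto
      also have "\<dots> = K + (2 / real T) * (\<Sum>t<T. nu \<omega> t)"
        unfolding K_def using Tp eta alpha by (simp add: field_simps)
      finally show ?thesis .
    qed
    have inu: "integrable M (\<lambda>\<omega>. nu \<omega> t)" "(\<integral>\<omega>. nu \<omega> t \<partial>M) \<le> (1 - \<alpha>) ^ t * \<sigma> + mm" if "t < T" for t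
      using S.noise_L1[OF that] unfolding nu_def mm_def by auto
    have nun: "0 \<le> nu \<omega> t" for \<omega> t unfolding nu_def by (rule dual_nonneg[OF norm])
    have iK: "integrable M (\<lambda>\<omega>. K + (2 / real T) * (\<Sum>t<T. nu \<omega> t))"
      using inu(1) by (intro Bochner_Integration.integrable_add Bochner_Integration.integrable_mult_right
          Bochner_Integration.integrable_sum) auto
    have geo: "(\<Sum>t<T. (1 - \<alpha>) ^ t) \<le> 1 / \<alpha>"
    proof -
      have "(\<Sum>t<T. (1 - \<alpha>) ^ t) = (1 - (1 - \<alpha>) ^ T) / \<alpha>" using alpha by (simp add: sum_gp_strict)
      also have "\<dots> \<le> 1 / \<alpha>" using alpha by (intro divide_right_mono) auto
      finally show ?thesis .
    qed
    have "(\<integral>\<^sup>+\<omega>. ennreal ((1 / real T) * (\<Sum>t<T. dual_norm N (g (fst (nsdm sel \<alpha> \<eta> x0 (\<lambda>s. G s \<omega>) t))))) \<partial>M)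
        \<le> (\<integral>\<^sup>+\<omega>. ennreal (K + (2 / real T) * (\<Sum>t<T. nu \<omega> t)) \<partial>M)"
      by (intro nn_integral_mono ennreal_leI pw)
    also have "\<dots> = ennreal (\<integral>\<omega>. K + (2 / real T) * (\<Sum>t<T. nu \<omega> t) \<partial>M)"
    proof (rule nn_integral_eq_integral[OF iK])
      show "AE x in M. 0 \<le> K + 2 / real T * (\<Sum>t<T. nu x t)"
      proof (rule AE_I2)
        fix \<omega>
        have "0 \<le> (1 / real T) * (\<Sum>t<T. dual_norm N (g (fst (nsdm sel \<alpha> \<eta> x0 (\<lambda>s. G s \<omega>) t))))"
          using Tp by (intro mult_nonneg_nonneg sum_nonneg dual_nonneg[OF norm]) auto
        then show "0 \<le> K + 2 / real T * (\<Sum>t<T. nu \<omega> t)" using pw[of \<omega>] by linarith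
      qed
    qed
    also have "(\<integral>\<omega>. K + (2 / real T) * (\<Sum>t<T. nu \<omega> t) \<partial>M) = K + (2 / real T) * (\<Sum>t<T. (\<integral>\<omega>. nu \<omega> t \<partial>M))"
    proof -
      have isum: "integrable M (\<lambda>\<omega>. \<Sum>t<T. nu \<omega> t)"
        using inu(1) by (intro Bochner_Integration.integrable_sum) auto
      have "(\<integral>\<omega>. K + (2 / real T) * (\<Sum>t<T. nu \<omega> t) \<partial>M) = K + (2 / real T) * (\<integral>\<omega>. (\<Sum>t<T. nu \<omega> t) \<partial>M)"
        using isum by (subst Bochner_Integration.integral_add) (auto simp: prob_space)
      also have "(\<integral>\<omega>. (\<Sum>t<T. nu \<omega> t) \<partial>M) = (\<Sum>t<T. (\<integral>\<omega>. nu \<omega> t \<partial>M))"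
        by (rule Bochner_Integration.integral_sum) (use inu(1) in auto)
      finally show ?thesis .
    qed
    also have "\<dots> \<le> K + (2 / real T) * (\<Sum>t<T. (1 - \<alpha>) ^ t * \<sigma> + mm)"
      using inu(2) Tp by (intro add_left_mono mult_left_mono sum_mono) auto
    also have "\<dots> = K + (2 / real T) * (\<sigma> * (\<Sum>t<T. (1 - \<alpha>) ^ t)) + 2 * mm"
      using Tp by (simp add: sum.distrib sum_distrib_left sum_distrib_right field_simps)
    also have "\<dots> \<le> K + (2 / real T) * (\<sigma> * (1 / \<alpha>)) + 2 * mm"
      using geo sigma Tp by (intro add_right_mono add_left_mono mult_left_mono) auto
    also have "\<dots> = (f x0 - Inf (range f)) / (\<eta> * real T) + 2 * \<eta> / \<alpha> * smooth_const N g
              + 2 / (\<alpha> * real T) * \<sigma> + 2 * \<sigma> * min 1 (sqrt \<alpha> * psi N)"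
    proof -
      have "\<sigma> * min 1 (sqrt \<alpha> * psi N) = mm"
        unfolding mm_def using sigma by (simp add: min_mult_distrib_left mult.commute mult.left_commute)
      then show ?thesis unfolding K_def B_def L_def by (simp add: field_simps)
    qed
    finally show ?thesis by (simp add: ennreal_leI)
  qed
qed


end
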